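(* Let $\mathcal{J}\subset\mathbb{R}$ be a compact interval, $V\subset\mathbb{R}^d$ a bounded open set, $\Lambda$ a finite set, and for each $i\in\Lambda$ let $f_i:\overline V\times\mathcal J\to V$ be real-analytic on a neighborhood of $\overline V\times\mathcal J$, with $f_{i,t}=f_i(\cdot,t)$ and $\mathcal F_t=\{f_{i,t}\}_{i\in\Lambda}$. Assume there exist $C>0$, $0<\gamma<1$ with $\|f'_{\mathbf i,t}(x)\|\le C\gamma^n$ for all $\mathbf i\in\Lambda^n$, $x\in\overline V$, $t\in\mathcal J$. If $\{\mathcal F_t\}_{t\in\mathcal J}$ is transverse of order $k\ge1$ on $\mathcal J$, then the set $E$ has Hausdorff dimension zero.
   Context: For $\mathbf i=i_1\ldots i_n$, $f_{\mathbf i,t}=f_{i_1,t}\circ\cdots\circ f_{i_n,t}$. Fix $x_0\in V$; $F_{\mathbf i}(t)=f_{\mathbf i,t}(x_0)$ for finite words and $\Delta_{\mathbf i,\mathbf j}=F_{\mathbf i}-F_{\mathbf j}$. Transverse of order $k$: there exists $c>0$ such that for all $n$ and $\mathbf i,\mathbf j\in\Lambda^n$ with $i_1\ne j_1$, for every $t\in\mathcal J$ there is $p\in\{0,\ldots,k\}$ with $\|\Delta^{(p)}_{\mathbf i,\mathbf j}(t)\|>c$. $E=\bigcap_{\varepsilon>0}\bigcap_{N\ge1}\bigcup_{n>N}\bigcup_{\mathbf i,\mathbf j\in\Lambda^n,\,i_1\ne j_1}\Delta_{\mathbf i,\mathbf j}^{-1}(B_{\varepsilon^n})$, with $B_r=\{x\in\mathbb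 R^d:\|x\|\le r\}$. *)

theory Defs
  imports "HOL-Analysis.Analysis"
begin

definition real_analytic_xt_on ::
  "(real^'d \<Rightarrow> real \<Rightarrow> real^'e) \<Rightarrow> ((real^'d) \<times> real) set \<Rightarrow> bool" where
  "real_analytic_xt_on g U \<longleftrightarrow>
     (\<forall>(x0, t0) \<in> U. \<exists>r>0. \<exists>c :: ('d \<Rightarrow> nat) \<Rightarrow> nat \<Rightarrow> real^'e.
        \<forall>x t. dist (x, t) (x0, t0) < r \<longrightarrow>
          ((\<lambda>(\<alpha>, m). ((\<Prod>i\<in>UNIV. (x$i - x0$i) ^ \<alpha> i) * (t - t0) ^ m) *\<^sub>R c \<alpha> m)
              has_sum g x t) UNIV \<and>
          (\<lambda>(\<alpha>, m). norm (((\<Prod>i\<in>UNIV. (x$i - x0$i) ^ \<alpha> i) * (t - t0) ^ m) *\<^sub>R c \<alpha> m))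
              summable_on UNIV)"

fun comp_word :: "('i \<Rightarrow> 'v \<Rightarrow> real \<Rightarrow> 'v) \<Rightarrow> 'i list \<Rightarrow> real \<Rightarrow> 'v \<Rightarrow> 'v" where
  "comp_word f [] t = id"
| "comp_word f (i # is) t = (\<lambda>x. f i x t) \<circ> comp_word f is t"

fun vderiv_n :: "nat \<Rightarrow> (real \<Rightarrow> 'a::real_normed_vector) \<Rightarrow> real \<Rightarrow> 'a" where
  "vderiv_n 0 g = g"
| "vderiv_n (Suc p) g = (\<lambda>t. vector_derivative (vderiv_n p g) (at t))"

definition hausdorff_pre :: "real \<Rightarrow> real \<Rightarrow> 'a::metric_space set \<Rightarrow> ennreal" where
  "hausdorff_pre s \<delta> A =
     (INF U \<in> {U :: nat \<Rightarrow> 'a set. A \<subseteq> (\<Union>k. U k) \<and> (\<forall>k. bounded (U k) \<and> diameter (U k) \<le> \<delta>)}.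
        (\<Sum>k. ennreal (diameter (U k) powr s)))"

definition hausdorff_outer :: "real \<Rightarrow> 'a::metric_space set \<Rightarrow> ennreal" where
  "hausdorff_outer s A = (SUP \<delta> \<in> {0<..}. hausdorff_pre s \<delta> A)"

definition hausdorff_dim :: "'a::metric_space set \<Rightarrow> ereal" where
  "hausdorff_dim A = (INF s \<in> {s::real. 0 \<le> s \<and> hausdorff_outer s A = 0}. ereal s)"

definition Delta :: "('i \<Rightarrow> 'v \<Rightarrow> real \<Rightarrow> 'v::real_normed_vector) \<Rightarrow> 'v \<Rightarrow> 'i list \<Rightarrow> 'i list \<Rightarrow> real \<Rightarrow> 'v" where
  "Delta f x0 is js t = comp_word f is t x0 - comp_word f js t x0"

definition transverse_of_order ::
  "('i \<Rightarrow> 'v \<Rightarrow> real \<Rightarrow> 'v::real_normed_vector) \<Rightarrow> 'i set \<Rightarrow> 'v \<Rightarrow> real set \<Rightarrow> nat \<Rightarrow> bool" where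
  "transverse_of_order f Lam x0 J k \<longleftrightarrow>
     (\<exists>c>0. \<forall>n. \<forall>is js. is \<in> lists Lam \<and> js \<in> lists Lam \<and> length is = n \<and> length js = n
        \<and> hd is \<noteq> hd js \<longrightarrow>
        (\<forall>t\<in>J. \<exists>p\<le>k. norm (vderiv_n p (Delta f x0 is js) t) > c))"

definition exc_set ::
  "('i \<Rightarrow> 'v \<Rightarrow> real \<Rightarrow> 'v::real_normed_vector) \<Rightarrow> 'i set \<Rightarrow> 'v \<Rightarrow> real set \<Rightarrow> real set" where
  "exc_set f Lam x0 J =
     (\<Inter>\<epsilon>\<in>{0<..}. \<Inter>N\<in>{1..}. \<Union>n\<in>{N<..}.
        \<Union>(is, js) \<in> {(is, js). is \<in> lists Lam \<and> js \<in> lists Lam \<and> length is = n \<and> length js = n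
                              \<and> hd is \<noteq> hd js}.
          {t\<in>J. norm (Delta f x0 is js t) \<le> \<epsilon> ^ n})"

end

theory Submission
  imports Defs
begin

definition dpow :: "nat \<Rightarrow> nat \<Rightarrow> real \<Rightarrow> real" where
  "dpow b k z = (\<Prod>j<b. real (k - j)) * z ^ (k - b)"

lemma dpow_0[simp]: "dpow 0 k z = z ^ k" by (simp add: dpow_def)

lemma dpow_deriv: "((dpow b k) has_real_derivative dpow (Suc b) k z) (at z)"
proof -
  have "((\<lambda>z. (\<Prod>j<b. real (k - j)) * z ^ (k - b)) has_real_derivative
          (\<Prod>j<b. real (k - j)) * (real (k - b) * z ^ (k - b - Suc 0))) (at z)"
    by (intro DERIV_cmult DERIV_pow)
  moreover have "(\<Prod>j<b. real (k - j)) * (real (k - b) * z ^ (k - b - Suc 0)) = dpow (Suc b) k z"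
    by (simp add: dpow_def)
  ultimately show ?thesis unfolding dpow_def[abs_def] by (simp add: mult.assoc)
qed

lemma dpow_nonneg: "0 \<le> r \<Longrightarrow> 0 \<le> dpow b k r"
  by (simp add: dpow_def prod_nonneg)

lemma dpow_abs_le: assumes "\<bar>z\<bar> \<le> r" shows "\<bar>dpow b k z\<bar> \<le> dpow b k r"
proof -
  have "\<bar>dpow b k z\<bar> = (\<Prod>j<b. real (k - j)) * \<bar>z\<bar> ^ (k - b)"
    by (simp add: dpow_def abs_mult power_abs prod_nonneg)
  also have "\<dots> \<le> (\<Prod>j<b. real (k - j)) * r ^ (k - b)"
    using assms by (intro mult_left_mono power_mono prod_nonneg) auto
  finally show ?thesis by (simp add: dpow_def)
qed

lemma pow_times_geom_bounded:
  assumes "0 \<le> q" "q < 1"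
  shows "\<exists>B. \<forall>k. real k ^ b * q ^ k \<le> B"
proof (cases "b = 0")
  case True
  then show ?thesis using assms by (intro exI[of _ 1]) (auto intro: power_le_one)
next
  case False
  define q' where "q' = root b q"
  have q'0: "0 \<le> q'" using assms by (simp add: q'_def real_root_ge_zero)
  have q'1: "q' < 1" using assms False by (simp add: q'_def)
  have qq: "q' ^ b = q" using assms False by (simp add: q'_def)
  have "(\<lambda>n. of_nat n * q' ^ n) \<longlonglongrightarrow> (0::real)"
    by (rule powser_times_n_limit_0) (use q'0 q'1 in auto)
  then have "Bseq (\<lambda>n. of_nat n * q' ^ n :: real)" by (rule convergent_imp_Bseq[OF convergentI])
  then obtain K where K: "\<And>n. norm (of_nat n * q' ^ n :: real) \<le> K" unfolding Bseq_def by auto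
  show ?thesis
  proof (intro exI allI)
    fix k
    have "real k ^ b * q ^ k = (real k * q' ^ k) ^ b"
      by (simp add: power_mult_distrib qq[symmetric] power_mult[symmetric] mult.commute)
    also have "\<dots> \<le> K ^ b"
      using K[of k] q'0 by (intro power_mono) auto
    finally show "real k ^ b * q ^ k \<le> K ^ b" .
  qed
qed

lemma dpow_le_geom:
  assumes "0 < r1" "r1 < r"
  shows "\<exists>K. \<forall>k. dpow b k r1 \<le> K * r ^ k"
proof -
  obtain B where B: "\<And>k. real k ^ b * (r1 / r) ^ k \<le> B"
    using pow_times_geom_bounded[of "r1/r" b] assms by auto
  show ?thesis
  proof (intro exI allI)
    fix k
    show "dpow b k r1 \<le> (B / r1 ^ b) * r ^ k"
    proof (cases "b \<le> k")
      case False
      then have "(\<Prod>j<b. real (k - j)) = 0"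
        by (intro prod_zero bexI[of _ k]) auto
      then have "dpow b k r1 = 0" by (simp add: dpow_def)
      moreover have "0 \<le> B" using B[of 0] assms False by simp (smt (verit) B zero_le_power zero_le_divide_iff of_nat_0_le_iff)
      ultimately show ?thesis using assms by simp
    next
      case True
      have "(\<Prod>j<b. real (k - j)) \<le> (\<Prod>j<b. real k)"
        by (intro prod_mono) auto
      then have "dpow b k r1 \<le> real k ^ b * r1 ^ (k - b)"
        unfolding dpow_def using assms by (intro mult_right_mono) auto
      also have "\<dots> = (real k ^ b * (r1 / r) ^ k) * r ^ k / r1 ^ b"
        using assms True by (simp add: power_divide field_simps power_diff)
      also have "\<dots> \<le> B * r ^ k / r1 ^ b"
        using assms B[of k] by (intro divide_right_mono mult_right_mono) auto
      finally show ?thesis by simp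
    qed
  qed
qed

definition cd :: "'d option \<Rightarrow> (real^'d) \<times> real \<Rightarrow> real" where
  "cd w y = (case w of None \<Rightarrow> snd y | Some i \<Rightarrow> fst y $ i)"

lemma cd_simps[simp]: "cd None y = snd y" "cd (Some i) y = fst y $ i"
  by (auto simp: cd_def)

lemma cd_linear: "cd w (a + b) = cd w a + cd w b" "cd w (r *\<^sub>R a) = r * cd w a"
  "cd w (a - b) = cd w a - cd w b" "cd w 0 = 0"
  by (cases w; simp)+

lemma abs_cd_le: "\<bar>cd w y\<bar> \<le> norm y"
proof (cases w)
  case None
  then show ?thesis using norm_snd_le[of "snd y" "fst y"] by simp
next
  case (Some i)
  then show ?thesis using component_le_norm_cart[of "fst y" i] norm_fst_le[of "fst y" "snd y"] by simp
qed

lemma sum_option: "(\<Sum>w\<in>UNIV. f w) = f None + (\<Sum>i\<in>UNIV. f (Some i))"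
  for f :: "'d::finite option \<Rightarrow> 'a::comm_monoid_add"
proof -
  have "UNIV = insert None (range Some)" by (auto intro: option.exhaust)
  then have "(\<Sum>w\<in>UNIV. f w) = (\<Sum>w\<in>insert None (range Some). f w)" by (rule arg_cong)
  also have "\<dots> = f None + (\<Sum>w\<in>range Some. f w)" by (rule sum.insert) auto
  also have "(\<Sum>w\<in>range Some. f w) = (\<Sum>i\<in>UNIV. f (Some i))"
    by (subst sum.reindex) auto
  finally show ?thesis .
qed

definition mon :: "('d option \<Rightarrow> nat) \<Rightarrow> ('d \<Rightarrow> nat) \<times> nat \<Rightarrow> (real^'d) \<times> real \<Rightarrow> (real^'d) \<times> real \<Rightarrow> real" where
  "mon \<beta> \<kappa> p0 y = (\<Prod>i\<in>UNIV. dpow (\<beta> (Some i)) (fst \<kappa> i) (fst y $ i - fst p0 $ i))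
      * dpow (\<beta> None) (snd \<kappa>) (snd y - snd p0)"

definition maj :: "('d option \<Rightarrow> nat) \<Rightarrow> real \<Rightarrow> ('d \<Rightarrow> nat) \<times> nat \<Rightarrow> real" where
  "maj \<beta> r \<kappa> = (\<Prod>i\<in>UNIV. dpow (\<beta> (Some i)) (fst \<kappa> i) r) * dpow (\<beta> None) (snd \<kappa>) r"

definition inc :: "('d option \<Rightarrow> nat) \<Rightarrow> 'd option \<Rightarrow> ('d option \<Rightarrow> nat)" where
  "inc \<beta> w = \<beta>(w := Suc (\<beta> w))"

lemma maj_nonneg: "0 \<le> r \<Longrightarrow> 0 \<le> maj \<beta> r \<kappa>"
  unfolding maj_def by (intro mult_nonneg_nonneg prod_nonneg dpow_nonneg) auto

lemma mon_abs_le: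
  assumes "dist y p0 \<le> r"
  shows "\<bar>mon \<beta> \<kappa> p0 y\<bar> \<le> maj \<beta> r \<kappa>"
proof -
  have n: "norm (y - p0) \<le> r" using assms by (simp add: dist_norm)
  have r0: "0 \<le> r" using assms by (metis dist_commute zero_le_dist order.trans)
  have c1: "\<bar>fst y $ i - fst p0 $ i\<bar> \<le> r" for i
    using abs_cd_le[of "Some i" "y - p0"] n by simp
  have c2: "\<bar>snd y - snd p0\<bar> \<le> r"
    using abs_cd_le[of "None" "y - p0"] n by simp
  have "\<bar>mon \<beta> \<kappa> p0 y\<bar> = (\<Prod>i\<in>UNIV. \<bar>dpow (\<beta> (Some i)) (fst \<kappa> i) (fst y $ i - fst p0 $ i)\<bar>)
      * \<bar>dpow (\<beta> None) (snd \<kappa>) (snd y - snd p0)\<bar>"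
    by (simp add: mon_def abs_mult abs_prod)
  also have "\<dots> \<le> maj \<beta> r \<kappa>"
    unfolding maj_def
    by (intro mult_mono prod_mono conjI dpow_abs_le c1 c2 prod_nonneg dpow_nonneg r0) auto
  finally show ?thesis .
qed

lemma maj_summable:
  assumes "(\<lambda>\<kappa>. maj (\<lambda>_. 0) r \<kappa> * M \<kappa>) summable_on UNIV" "\<And>\<kappa>. 0 \<le> M \<kappa>"
    and "0 < r1" "r1 < r"
  shows "(\<lambda>\<kappa>. maj \<beta> r1 \<kappa> * M \<kappa>) summable_on UNIV"
proof -
  have "\<forall>b. \<exists>K. \<forall>k. dpow b k r1 \<le> K * r ^ k" using dpow_le_geom[OF assms(3,4)] by blast
  then obtain K where K: "\<And>b k. dpow b k r1 \<le> K b * r ^ k" by metis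
  have K0: "0 \<le> K b" for b
  proof -
    have "0 \<le> K b * r ^ 0" using K[of b 0] dpow_nonneg[of r1 b 0] assms by linarith
    then show ?thesis by simp
  qed
  define C where "C = (\<Prod>i\<in>UNIV. K (\<beta> (Some i))) * K (\<beta> None)"
  have le: "maj \<beta> r1 \<kappa> \<le> C * maj (\<lambda>_. 0) r \<kappa>" for \<kappa>
  proof -
    have "maj \<beta> r1 \<kappa> \<le> (\<Prod>i\<in>UNIV. K (\<beta> (Some i)) * r ^ (fst \<kappa> i)) * (K (\<beta> None) * r ^ snd \<kappa>)"
      unfolding maj_def
      by (intro mult_mono prod_mono conjI K dpow_nonneg prod_nonneg mult_nonneg_nonneg K0 zero_le_power) (use assms in auto)
    also have "\<dots> = C * maj (\<lambda>_. 0) r \<kappa>"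
      by (simp add: C_def maj_def prod.distrib)
    finally show ?thesis .
  qed
  have "(\<lambda>\<kappa>. C * (maj (\<lambda>_. 0) r \<kappa> * M \<kappa>)) summable_on UNIV"
    by (intro summable_on_cmult_right assms(1))
  then show ?thesis
  proof (rule summable_on_comparison_test)
    fix \<kappa>
    show "maj \<beta> r1 \<kappa> * M \<kappa> \<le> C * (maj (\<lambda>_. 0) r \<kappa> * M \<kappa>)"
      using le[of \<kappa>] assms(2)[of \<kappa>] by (simp add: mult.assoc[symmetric] mult_right_mono)
    show "0 \<le> maj \<beta> r1 \<kappa> * M \<kappa>" using assms(3) by (intro mult_nonneg_nonneg maj_nonneg assms(2)) simp
  qed
qed


lemma dpow_has_derivative:
  "((\<lambda>y. dpow b k (l y - c)) has_derivative (\<lambda>h. dpow (Suc b) k (l y0 - c) * l h)) (at y0 within S)"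
  if "bounded_linear l"
proof -
  have l: "((\<lambda>y. l y - c) has_derivative l) (at y0 within S)"
  proof -
    have "((\<lambda>y. l y - c) has_derivative (\<lambda>h. l h - 0)) (at y0 within S)"
      by (intro has_derivative_diff bounded_linear_imp_has_derivative that has_derivative_const)
    then show ?thesis by simp
  qed
  have d: "(dpow b k has_derivative (\<lambda>h. dpow (Suc b) k (l y0 - c) * h)) (at (l y0 - c))"
    using dpow_deriv[of b k "l y0 - c"] by (simp add: has_field_derivative_def)
  from has_derivative_compose[OF l d] show ?thesis by simp
qed

lemma bl_fst_nth: "bounded_linear (\<lambda>y::(real^'d)\<times>real. fst y $ i)"
  using bounded_linear_compose[OF bounded_linear_vec_nth[of i] bounded_linear_fst] by (simp add: o_def)

lemma mon_deriv:
  fixes p0 :: "(real^'d) \<times> real"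
  shows "((\<lambda>y. mon \<beta> \<kappa> p0 y) has_derivative (\<lambda>h. \<Sum>w\<in>UNIV. cd w h * mon (inc \<beta> w) \<kappa> p0 y0)) (at y0 within S)"
proof -
  define g where "g (i::'d) (y::(real^'d)\<times>real) = dpow (\<beta> (Some i)) (fst \<kappa> i) (fst y $ i - fst p0 $ i)" for i y
  define g' where "g' i h = dpow (Suc (\<beta> (Some i))) (fst \<kappa> i) (fst y0 $ i - fst p0 $ i) * (fst h $ i)" for i :: 'd and h :: "(real^'d)\<times>real"
  define q where "q (y::(real^'d)\<times>real) = dpow (\<beta> None) (snd \<kappa>) (snd y - snd p0)" for y
  define q' where "q' h = dpow (Suc (\<beta> None)) (snd \<kappa>) (snd y0 - snd p0) * snd h" for h :: "(real^'d)\<times>real"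
  have dg: "(g i has_derivative g' i) (at y0 within S)" for i
    unfolding g_def[abs_def] g'_def[abs_def]
    by (rule dpow_has_derivative[OF bl_fst_nth])
  have dq: "(q has_derivative q') (at y0 within S)"
    unfolding q_def[abs_def] q'_def[abs_def]
    by (rule dpow_has_derivative[OF bounded_linear_snd])
  have dP: "((\<lambda>y. \<Prod>i\<in>UNIV. g i y) has_derivative (\<lambda>h. \<Sum>i\<in>UNIV. g' i h * (\<Prod>j\<in>UNIV - {i}. g j y0))) (at y0 within S)"
    by (rule has_derivative_prod) (rule dg)
  have m: "mon \<beta> \<kappa> p0 = (\<lambda>y. (\<Prod>i\<in>UNIV. g i y) * q y)"
    by (auto simp: mon_def g_def q_def)
  have D: "((\<lambda>y. (\<Prod>i\<in>UNIV. g i y) * q y) has_derivative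
     (\<lambda>h. (\<Prod>i\<in>UNIV. g i y0) * q' h + (\<Sum>i\<in>UNIV. g' i h * (\<Prod>j\<in>UNIV - {i}. g j y0)) * q y0)) (at y0 within S)"
    by (rule has_derivative_mult[OF dP dq])
  have eq: "(\<Prod>i\<in>UNIV. g i y0) * q' h + (\<Sum>i\<in>UNIV. g' i h * (\<Prod>j\<in>UNIV - {i}. g j y0)) * q y0
      = (\<Sum>w\<in>UNIV. cd w h * mon (inc \<beta> w) \<kappa> p0 y0)" for h
  proof -
    have N: "cd None h * mon (inc \<beta> None) \<kappa> p0 y0 = (\<Prod>i\<in>UNIV. g i y0) * q' h"
      by (simp add: mon_def inc_def g_def q'_def mult_ac)
    have S: "cd (Some i) h * mon (inc \<beta> (Some i)) \<kappa> p0 y0 = g' i h * (\<Prod>j\<in>UNIV - {i}. g j y0) * q y0" for i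
    proof -
      have "(\<Prod>j\<in>UNIV. dpow (inc \<beta> (Some i) (Some j)) (fst \<kappa> j) (fst y0 $ j - fst p0 $ j))
          = dpow (Suc (\<beta> (Some i))) (fst \<kappa> i) (fst y0 $ i - fst p0 $ i) *
            (\<Prod>j\<in>UNIV - {i}. dpow (inc \<beta> (Some i) (Some j)) (fst \<kappa> j) (fst y0 $ j - fst p0 $ j))"
        by (subst prod.remove[where x=i]) (simp_all add: inc_def)
      also have "(\<Prod>j\<in>UNIV - {i}. dpow (inc \<beta> (Some i) (Some j)) (fst \<kappa> j) (fst y0 $ j - fst p0 $ j))
          = (\<Prod>j\<in>UNIV - {i}. g j y0)"
        by (intro prod.cong refl) (simp add: inc_def g_def)
      finally have P: "(\<Prod>j\<in>UNIV. dpow (inc \<beta> (Some i) (Some j)) (fst \<kappa> j) (fst y0 $ j - fst p0 $ j))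
          = dpow (Suc (\<beta> (Some i))) (fst \<kappa> i) (fst y0 $ i - fst p0 $ i) * (\<Prod>j\<in>UNIV - {i}. g j y0)" .
      show ?thesis
        unfolding mon_def P by (simp add: g'_def q_def inc_def mult_ac)
    qed
    show ?thesis
      unfolding sum_option N S sum_distrib_right by (simp add: add.commute)
  qed
  show ?thesis using D unfolding m eq .
qed


definition ser :: "(('d \<Rightarrow> nat) \<times> nat \<Rightarrow> 'b::real_normed_vector) \<Rightarrow> ('d option \<Rightarrow> nat) \<Rightarrow> (real^'d) \<times> real \<Rightarrow> (real^'d) \<times> real \<Rightarrow> 'b" where
  "ser c \<beta> p0 y = (\<Sum>\<^sub>\<infinity>\<kappa>. mon \<beta> \<kappa> p0 y *\<^sub>R c \<kappa>)"

definition en :: "nat \<Rightarrow> ('d::finite \<Rightarrow> nat) \<times> nat" where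
  "en = from_nat_into UNIV"

lemma en_bij: "bij_betw (en :: nat \<Rightarrow> ('d::finite \<Rightarrow> nat) \<times> nat) UNIV UNIV"
proof -
  have "infinite (UNIV :: (('d \<Rightarrow> nat) \<times> nat) set)"
  proof
    assume "finite (UNIV :: (('d \<Rightarrow> nat) \<times> nat) set)"
    then have "finite (snd ` (UNIV :: (('d \<Rightarrow> nat) \<times> nat) set))" by (rule finite_imageI)
    moreover have "snd ` (UNIV :: (('d \<Rightarrow> nat) \<times> nat) set) = UNIV"
    proof (rule surjI)
      show "snd (undefined, x) = x" for x by simp
    qed
    ultimately show False by (metis infinite_UNIV_nat)
  qed
  then show ?thesis unfolding en_def by (intro bij_betw_from_nat_into countableI_type)
qed

lemma abs_sums:
  fixes f :: "('d::finite \<Rightarrow> nat) \<times> nat \<Rightarrow> 'b::banach"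
  assumes "M summable_on UNIV" "\<And>\<kappa>. norm (f \<kappa>) \<le> M \<kappa>"
  shows "(\<lambda>n. f (en n)) sums (\<Sum>\<^sub>\<infinity>\<kappa>. f \<kappa>)" "summable (\<lambda>n. M (en n))"
proof -
  have M0: "0 \<le> M \<kappa>" for \<kappa> using assms(2)[of \<kappa>] norm_ge_zero order.trans by blast
  have "(\<lambda>\<kappa>. norm (M \<kappa>)) summable_on UNIV"
    using assms(1) summable_on_iff_abs_summable_on_real by blast
  then have "(\<lambda>\<kappa>. norm (f \<kappa>)) summable_on UNIV"
    by (rule Infinite_Sum.abs_summable_on_comparison_test) (use assms(2) M0 in auto)
  then have "f summable_on UNIV" by (rule abs_summable_summable)
  then have "(f has_sum (\<Sum>\<^sub>\<infinity>\<kappa>. f \<kappa>)) UNIV" by (rule has_sum_infsum)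
  then have "((\<lambda>n. f (en n)) has_sum (\<Sum>\<^sub>\<infinity>\<kappa>. f \<kappa>)) UNIV"
    using has_sum_reindex_bij_betw[OF en_bij] by blast
  then show "(\<lambda>n. f (en n)) sums (\<Sum>\<^sub>\<infinity>\<kappa>. f \<kappa>)" by (rule has_sum_imp_sums)
  have "(M has_sum (\<Sum>\<^sub>\<infinity>\<kappa>. M \<kappa>)) UNIV" using assms(1) by (rule has_sum_infsum)
  then have "((\<lambda>n. M (en n)) has_sum (\<Sum>\<^sub>\<infinity>\<kappa>. M \<kappa>)) UNIV"
    using has_sum_reindex_bij_betw[OF en_bij] by blast
  then show "summable (\<lambda>n. M (en n))" using has_sum_imp_sums sums_summable by blast
qed

lemma ser_deriv:
  fixes c :: "('d::finite \<Rightarrow> nat) \<times> nat \<Rightarrow> 'b::banach" and p0 :: "(real^'d) \<times> real"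
  assumes sm: "(\<lambda>\<kappa>. maj (\<lambda>_. 0) r \<kappa> * norm (c \<kappa>)) summable_on UNIV"
    and r1: "0 < r1" "r1 < r" and y0: "y0 \<in> ball p0 r1"
  shows "(ser c \<beta> p0 has_derivative (\<lambda>h. \<Sum>w\<in>UNIV. cd w h *\<^sub>R ser c (inc \<beta> w) p0 y0)) (at y0)"
proof -
  define S where "S = ball p0 r1"
  have Msum: "(\<lambda>\<kappa>. maj \<beta>' r1 \<kappa> * norm (c \<kappa>)) summable_on UNIV" for \<beta>'
    by (rule maj_summable[OF sm _ r1]) simp
  have bnd: "norm (mon \<beta>' \<kappa> p0 y *\<^sub>R c \<kappa>) \<le> maj \<beta>' r1 \<kappa> * norm (c \<kappa>)" if "y \<in> S" for \<beta>' y \<kappa>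
  proof -
    have "dist y p0 \<le> r1" using that by (simp add: S_def dist_commute)
    then show ?thesis using mon_abs_le[of y p0 r1 \<beta>' \<kappa>] by (simp add: mult_right_mono)
  qed
  have sums: "(\<lambda>n. mon \<beta>' (en n) p0 y *\<^sub>R c (en n)) sums ser c \<beta>' p0 y" if "y \<in> S" for \<beta>' y
    unfolding ser_def by (rule abs_sums(1)[OF Msum bnd[OF that]])
  have msum: "summable (\<lambda>n. maj \<beta>' r1 (en n) * norm (c (en n)))" for \<beta>' :: "'d option \<Rightarrow> nat"
  proof -
    have "norm (mon \<beta>' \<kappa> p0 y0 *\<^sub>R c \<kappa>) \<le> maj \<beta>' r1 \<kappa> * norm (c \<kappa>)" for \<kappa> :: "('d \<Rightarrow> nat) \<times> nat"
      by (rule bnd) (use y0 S_def in auto)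
    then show ?thesis by (rule abs_sums(2)[OF Msum])
  qed
  define f where "f n y = mon \<beta> (en n) p0 y *\<^sub>R c (en n)" for n y
  define f' where "f' n y = (\<lambda>h. (\<Sum>w\<in>UNIV. cd w h * mon (inc \<beta> w) (en n) p0 y) *\<^sub>R c (en n))" for n y
  define g' where "g' y = (\<lambda>h. \<Sum>w\<in>UNIV. cd w h *\<^sub>R ser c (inc \<beta> w) p0 y)" for y
  define tl where "tl w n = (\<Sum>i. maj (inc \<beta> w) r1 (en (i + n)) * norm (c (en (i + n))))" for w n
  define D where "D = real (card (UNIV :: 'd option set))"
  have D0: "D > 0" unfolding D_def by (simp add: card_gt_0_iff)
  have "\<exists>g. \<forall>x\<in>S. (\<lambda>n. f n x) sums g x \<and> (g has_derivative g' x) (at x within S)"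
  proof (rule has_derivative_series)
    show "convex S" by (simp add: S_def)
    show "y0 \<in> S" using y0 by (simp add: S_def)
    show "(\<lambda>n. f n y0) sums ser c \<beta> p0 y0" unfolding f_def by (rule sums) (use y0 S_def in simp)
    show "(f n has_derivative f' n x) (at x within S)" if "x \<in> S" for n x
      unfolding f_def[abs_def] f'_def by (intro has_derivative_scaleR_left mon_deriv)
    show "\<forall>\<^sub>F n in sequentially. \<forall>x\<in>S. \<forall>h. norm (sum (\<lambda>i. f' i x h) {..<n} - g' x h) \<le> e * norm h"
      if e: "e > 0" for e
    proof -
      have "\<forall>\<^sub>F n in sequentially. tl w n < e / D" for w
      proof -
        obtain N where "\<forall>n\<ge>N. norm (tl w n) < e / D"
          using suminf_exist_split[OF _ msum[of "inc \<beta> w"], of "e / D"] e D0 unfolding tl_def by auto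
        then show ?thesis by (intro eventually_sequentiallyI[of N]) auto
      qed
      then have "\<forall>\<^sub>F n in sequentially. \<forall>w. tl w n < e / D" by (rule eventually_all_finite)
      then show ?thesis
      proof eventually_elim
        case (elim n)
        show ?case
        proof (intro ballI allI)
          fix x h assume x: "x \<in> S"
          define T where "T w i = mon (inc \<beta> w) (en i) p0 x *\<^sub>R c (en i)" for w i
          have sT: "(\<lambda>i. T w i) sums ser c (inc \<beta> w) p0 x" for w unfolding T_def by (rule sums[OF x])
          have sumT: "summable (T w)" for w using sT[of w] by (rule sums_summable)
          have tail: "ser c (inc \<beta> w) p0 x - (\<Sum>i<n. T w i) = (\<Sum>i. T w (i + n))" for w
            using suminf_minus_initial_segment[OF sumT[of w], of n] sums_unique[OF sT[of w]] by simp
          have tailb: "norm (\<Sum>i. T w (i + n)) \<le> tl w n" for w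
          proof -
            have sn: "summable (\<lambda>i. maj (inc \<beta> w) r1 (en (i + n)) * norm (c (en (i + n))))"
              using summable_ignore_initial_segment[OF msum[of "inc \<beta> w"], of n] by simp
            have le: "norm (T w (i + n)) \<le> maj (inc \<beta> w) r1 (en (i + n)) * norm (c (en (i + n)))" for i
              unfolding T_def by (rule bnd[OF x])
            have sTn: "summable (\<lambda>i. norm (T w (i + n)))"
              by (rule summable_comparison_test'[OF sn]) (use le in auto)
            have "norm (\<Sum>i. T w (i + n)) \<le> (\<Sum>i. norm (T w (i + n)))"
              by (rule summable_norm[OF sTn])
            also have "\<dots> \<le> tl w n" unfolding tl_def
              by (rule suminf_le[OF le sTn sn])
            finally show ?thesis .
          qed
          have "sum (\<lambda>i. f' i x h) {..<n} - g' x h = - (\<Sum>w\<in>UNIV. cd w h *\<^sub>R (ser c (inc \<beta> w) p0 x - (\<Sum>i<n. T w i)))"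
            unfolding f'_def g'_def T_def
            by (simp add: scaleR_sum_left scaleR_sum_right sum_subtractf scaleR_diff_right sum.swap[of _ "{..<n}"] algebra_simps)
          also have "norm \<dots> \<le> (\<Sum>w\<in>UNIV. norm (cd w h *\<^sub>R (ser c (inc \<beta> w) p0 x - (\<Sum>i<n. T w i))))"
            by (simp only: norm_minus_cancel) (rule norm_sum)
          also have "\<dots> \<le> (\<Sum>w\<in>(UNIV :: 'd option set). norm h * (e / D))"
          proof (rule sum_mono)
            fix w :: "'d option"
            have "norm (cd w h *\<^sub>R (ser c (inc \<beta> w) p0 x - (\<Sum>i<n. T w i))) = \<bar>cd w h\<bar> * norm (\<Sum>i. T w (i + n))"
              by (simp add: tail)
            also have "\<dots> \<le> norm h * (e / D)"
              using abs_cd_le[of w h] tailb[of w] elim[rule_format, of w]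
              by (intro mult_mono) auto
            finally show "norm (cd w h *\<^sub>R (ser c (inc \<beta> w) p0 x - (\<Sum>i<n. T w i))) \<le> norm h * (e / D)" .
          qed
          also have "\<dots> = e * norm h" using D0 by (simp add: D_def)
          finally show "norm (sum (\<lambda>i. f' i x h) {..<n} - g' x h) \<le> e * norm h" .
        qed
      qed
    qed
  qed
  then obtain g where g: "\<And>x. x \<in> S \<Longrightarrow> (\<lambda>n. f n x) sums g x \<and> (g has_derivative g' x) (at x within S)"
    by blast
  have geq: "g x = ser c \<beta> p0 x" if "x \<in> S" for x
    using g[OF that] sums[OF that, of \<beta>] sums_unique2 unfolding f_def by blast
  have y0S: "y0 \<in> S" using y0 S_def by simp
  have "(g has_derivative g' y0) (at y0)"
    using g[OF y0S] at_within_open[OF y0S] by (simp add: S_def)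
  then have "(ser c \<beta> p0 has_derivative g' y0) (at y0)"
    by (rule has_derivative_transform_within_open[of _ _ _ _ S]) (use geq y0S S_def in auto)
  then show ?thesis unfolding g'_def .
qed

definition dvec :: "'d option \<Rightarrow> (real^'d) \<times> real" where
  "dvec w = (case w of None \<Rightarrow> (0, 1) | Some i \<Rightarrow> (axis i 1, 0))"

lemma cd_dvec: "cd v (dvec w) = (if v = w then 1 else 0)"
  by (cases v; cases w) (auto simp: dvec_def axis_def)

definition pd :: "'d option \<Rightarrow> ((real^'d) \<times> real \<Rightarrow> 'b::real_normed_vector) \<Rightarrow> (real^'d) \<times> real \<Rightarrow> 'b" where
  "pd w G y = frechet_derivative G (at y) (dvec w)"

fun PP :: "'d option list \<Rightarrow> ((real^'d) \<times> real \<Rightarrow> 'b::real_normed_vector) \<Rightarrow> (real^'d) \<times> real \<Rightarrow> 'b" where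
  "PP [] G = G"
| "PP (w # ws) G = pd w (PP ws G)"

definition cnt :: "'d option list \<Rightarrow> 'd option \<Rightarrow> nat" where
  "cnt ws = (\<lambda>w. count_list ws w)"

lemma cnt_Nil: "cnt [] = (\<lambda>_. 0)" by (simp add: cnt_def fun_eq_iff)
lemma cnt_Cons: "cnt (w # ws) = inc (cnt ws) w" by (simp add: cnt_def inc_def fun_eq_iff)

lemma sum_cd_dvec:
  fixes F :: "'d::finite option \<Rightarrow> 'b::real_vector"
  shows "(\<Sum>v\<in>UNIV. cd v (dvec w) *\<^sub>R F v) = F w"
proof -
  have "cd v (dvec w) *\<^sub>R F v = (if v = w then F v else 0)" for v by (simp add: cd_dvec)
  then show ?thesis by simp
qed

lemma PP_local:
  fixes c :: "('d::finite \<Rightarrow> nat) \<times> nat \<Rightarrow> 'b::banach" and p0 :: "(real^'d) \<times> real"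
  assumes sm: "(\<lambda>\<kappa>. maj (\<lambda>_. 0) r \<kappa> * norm (c \<kappa>)) summable_on UNIV"
    and r1: "0 < r1" "r1 < r"
    and eq: "\<And>y. y \<in> ball p0 r1 \<Longrightarrow> G y = ser c (\<lambda>_. 0) p0 y"
  shows "\<forall>y\<in>ball p0 r1. PP ws G y = ser c (cnt ws) p0 y"
proof (induction ws)
  case Nil
  then show ?case using eq by (simp add: cnt_Nil)
next
  case (Cons w ws)
  show ?case
  proof
    fix y assume y: "y \<in> ball p0 r1"
    have d: "(ser c (cnt ws) p0 has_derivative (\<lambda>h. \<Sum>v\<in>UNIV. cd v h *\<^sub>R ser c (inc (cnt ws) v) p0 y)) (at y)"
      by (rule ser_deriv[OF sm r1 y])
    have d2: "(PP ws G has_derivative (\<lambda>h. \<Sum>v\<in>UNIV. cd v h *\<^sub>R ser c (inc (cnt ws) v) p0 y)) (at y)"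
      by (rule has_derivative_transform_within_open[OF d, of "ball p0 r1"]) (use y Cons.IH in auto)
    have "PP (w # ws) G y = (\<Sum>v\<in>UNIV. cd v (dvec w) *\<^sub>R ser c (inc (cnt ws) v) p0 y)"
      by (simp add: pd_def frechet_derivative_at[OF d2, symmetric])
    also have "\<dots> = ser c (cnt (w # ws)) p0 y"
      by (simp add: sum_cd_dvec cnt_Cons)
    finally show "PP (w # ws) G y = ser c (cnt (w # ws)) p0 y" .
  qed
qed

lemma PP_local_deriv:
  fixes c :: "('d::finite \<Rightarrow> nat) \<times> nat \<Rightarrow> 'b::banach" and p0 :: "(real^'d) \<times> real"
  assumes sm: "(\<lambda>\<kappa>. maj (\<lambda>_. 0) r \<kappa> * norm (c \<kappa>)) summable_on UNIV"
    and r1: "0 < r1" "r1 < r"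
    and eq: "\<And>y. y \<in> ball p0 r1 \<Longrightarrow> G y = ser c (\<lambda>_. 0) p0 y"
    and y: "y \<in> ball p0 r1"
  shows "(PP ws G has_derivative (\<lambda>h. \<Sum>v\<in>UNIV. cd v h *\<^sub>R PP (v # ws) G y)) (at y)"
proof -
  have L: "\<forall>y\<in>ball p0 r1. PP ws' G y = ser c (cnt ws') p0 y" for ws'
    by (rule PP_local[OF sm r1 eq])
  have d: "(ser c (cnt ws) p0 has_derivative (\<lambda>h. \<Sum>v\<in>UNIV. cd v h *\<^sub>R ser c (inc (cnt ws) v) p0 y)) (at y)"
    by (rule ser_deriv[OF sm r1 y])
  have "(\<lambda>h. \<Sum>v\<in>UNIV. cd v h *\<^sub>R ser c (inc (cnt ws) v) p0 y) = (\<lambda>h. \<Sum>v\<in>UNIV. cd v h *\<^sub>R PP (v # ws) G y)"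
  proof -
    have "ser c (inc (cnt ws) v) p0 y = PP (v # ws) G y" for v
      using L[of "v # ws"] y by (simp add: cnt_Cons del: PP.simps)
    then show ?thesis by simp
  qed
  with d have d': "(ser c (cnt ws) p0 has_derivative (\<lambda>h. \<Sum>v\<in>UNIV. cd v h *\<^sub>R PP (v # ws) G y)) (at y)"
    by simp
  show ?thesis
    by (rule has_derivative_transform_within_open[OF d', of "ball p0 r1"]) (use y L in auto)
qed

lemma analytic_PP_deriv:
  fixes g :: "real^'d \<Rightarrow> real \<Rightarrow> real^'e"
  assumes an: "real_analytic_xt_on g U" and p: "p \<in> U"
  shows "(PP ws (\<lambda>y. g (fst y) (snd y)) has_derivative
           (\<lambda>h. \<Sum>v\<in>UNIV. cd v h *\<^sub>R PP (v # ws) (\<lambda>y. g (fst y) (snd y)) p)) (at p)"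
proof -
  obtain x0 t0 where p0: "p = (x0, t0)" by (cases p)
  obtain r c where r: "r > 0" and cr: "\<And>x t. dist (x, t) (x0, t0) < r \<Longrightarrow>
      ((\<lambda>(\<alpha>, m). ((\<Prod>i\<in>UNIV. (x$i - x0$i) ^ \<alpha> i) * (t - t0) ^ m) *\<^sub>R c \<alpha> m) has_sum g x t) UNIV \<and>
      (\<lambda>(\<alpha>, m). norm (((\<Prod>i\<in>UNIV. (x$i - x0$i) ^ \<alpha> i) * (t - t0) ^ m) *\<^sub>R c \<alpha> m)) summable_on UNIV"
    using an p unfolding real_analytic_xt_on_def p0 by fastforce
  define cc where "cc \<kappa> = c (fst \<kappa>) (snd \<kappa>)" for \<kappa>
  define D where "D = real (CARD('d))"
  define \<rho> where "\<rho> = r / (2 * (D + 1))"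
  have D0: "D \<ge> 0" by (simp add: D_def)
  have \<rho>0: "\<rho> > 0" using r D0 by (simp add: \<rho>_def)
  have trm_eq: "((\<Prod>i\<in>UNIV. (x$i - x0$i) ^ fst \<kappa> i) * (t - t0) ^ snd \<kappa>) *\<^sub>R c (fst \<kappa>) (snd \<kappa>)
        = mon (\<lambda>_. 0) \<kappa> (x0, t0) (x, t) *\<^sub>R cc \<kappa>" for x t \<kappa>
    by (simp add: mon_def cc_def)
  define ys where "ys = ((\<chi> i. x0 $ i + \<rho>), t0 + \<rho>)"
  have "dist ys (x0, t0) \<le> (D + 1) * \<rho>"
  proof -
    have "dist ys (x0, t0) = norm ((\<chi> i. \<rho>) :: real^'d, \<rho>)"
    proof -
      have "(\<chi> i. x0 $ i + \<rho>) - x0 = ((\<chi> i. \<rho>) :: real^'d)" by (simp add: vec_eq_iff)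
      then show ?thesis by (simp add: ys_def dist_norm)
    qed
    also have "\<dots> \<le> norm ((\<chi> i. \<rho>) :: real^'d) + norm \<rho>"
      by (metis norm_Pair_le)
    also have "norm ((\<chi> i. \<rho>) :: real^'d) \<le> (\<Sum>i\<in>UNIV. \<bar>((\<chi> i. \<rho>) :: real^'d) $ i\<bar>)"
      by (rule norm_le_l1_cart)
    also have "\<dots> = D * \<rho>" using \<rho>0 by (simp add: D_def)
    finally show ?thesis using \<rho>0 by (simp add: algebra_simps)
  qed
  also have "\<dots> < r" using r D0 \<rho>0 by (simp add: \<rho>_def field_simps add_pos_nonneg)
  finally have ysr: "dist ys (x0, t0) < r" .
  have "(\<lambda>(\<alpha>, m). norm (((\<Prod>i\<in>UNIV. (fst ys$i - x0$i) ^ \<alpha> i) * (snd ys - t0) ^ m) *\<^sub>R c \<alpha> m)) summable_on UNIV"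
    using cr[of "fst ys" "snd ys"] ysr by simp
  moreover have "(\<lambda>(\<alpha>, m). norm (((\<Prod>i\<in>UNIV. (fst ys$i - x0$i) ^ \<alpha> i) * (snd ys - t0) ^ m) *\<^sub>R c \<alpha> m))
      = (\<lambda>\<kappa>. maj (\<lambda>_. 0) \<rho> \<kappa> * norm (cc \<kappa>))"
    using \<rho>0 by (auto simp: fun_eq_iff ys_def maj_def cc_def abs_mult prod_nonneg)
  ultimately have sm: "(\<lambda>\<kappa>. maj (\<lambda>_. 0) \<rho> \<kappa> * norm (cc \<kappa>)) summable_on UNIV" by simp
  have r1: "0 < \<rho>/2" "\<rho>/2 < \<rho>" using \<rho>0 by auto
  have ball_sub: "dist y (x0, t0) < r" if "y \<in> ball (x0, t0) (\<rho>/2)" for y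
  proof -
    have "\<rho>/2 \<le> r" using r D0 by (simp add: \<rho>_def field_simps)
    then show ?thesis using that by (simp add: dist_commute)
  qed
  have eq: "(\<lambda>y. g (fst y) (snd y)) y = ser cc (\<lambda>_. 0) (x0, t0) y" if "y \<in> ball (x0, t0) (\<rho>/2)" for y
  proof -
    obtain x t where y: "y = (x, t)" by (cases y)
    have "((\<lambda>(\<alpha>, m). ((\<Prod>i\<in>UNIV. (x$i - x0$i) ^ \<alpha> i) * (t - t0) ^ m) *\<^sub>R c \<alpha> m) has_sum g x t) UNIV"
      using cr[of x t] ball_sub[OF that] y by simp
    moreover have "(\<lambda>(\<alpha>, m). ((\<Prod>i\<in>UNIV. (x$i - x0$i) ^ \<alpha> i) * (t - t0) ^ m) *\<^sub>R c \<alpha> m)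
        = (\<lambda>\<kappa>. mon (\<lambda>_. 0) \<kappa> (x0, t0) (x, t) *\<^sub>R cc \<kappa>)"
      using trm_eq by (auto simp: fun_eq_iff)
    ultimately have "((\<lambda>\<kappa>. mon (\<lambda>_. 0) \<kappa> (x0, t0) (x, t) *\<^sub>R cc \<kappa>) has_sum g x t) UNIV" by simp
    then show ?thesis unfolding ser_def y by (simp add: infsumI)
  qed
  show ?thesis unfolding p0
    by (rule PP_local_deriv[OF sm r1 eq]) (use r1 in auto)
qed

definition gam :: "(real \<Rightarrow> real^'d) \<Rightarrow> nat \<Rightarrow> real \<Rightarrow> (real^'d) \<times> real" where
  "gam F q t = (vderiv_n q F t, if q = 0 then t else if q = 1 then 1 else 0)"

lemma gam0: "gam F 0 t = (F t, t)" by (simp add: gam_def)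

lemma gam_deriv:
  assumes "(vderiv_n q F has_vector_derivative vderiv_n (Suc q) F t) (at t)"
  shows "(gam F q has_vector_derivative gam F (Suc q) t) (at t)"
proof -
  have s: "((\<lambda>t::real. if q = 0 then t else if q = 1 then 1 else 0) has_vector_derivative (if Suc q = 1 then 1 else 0)) (at t)"
  proof (cases "q = 0")
    case True
    then show ?thesis using has_vector_derivative_id[of "at t"] by simp
  next
    case False
    then show ?thesis using has_vector_derivative_const[of "if q = 1 then 1 else (0::real)" "at t"] by simp
  qed
  have "((\<lambda>t. (vderiv_n q F t, if q = 0 then t else if q = 1 then 1 else 0)) has_vector_derivative
      (vderiv_n (Suc q) F t, if Suc q = 1 then 1 else 0)) (at t)"
    by (rule has_vector_derivative_Pair[OF assms s])
  then show ?thesis unfolding gam_def[abs_def] by simp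
qed

lemma bl_cd: "bounded_linear (cd w :: (real^'d) \<times> real \<Rightarrow> real)"
proof (cases w)
  case None
  then show ?thesis using bounded_linear_snd by (simp add: cd_def[abs_def])
next
  case (Some i)
  then show ?thesis using bl_fst_nth[of i] by (simp add: cd_def[abs_def])
qed

definition olist :: "'d::finite option list" where
  "olist = (SOME xs. distinct xs \<and> set xs = UNIV)"

lemma olist: "distinct (olist :: 'd::finite option list)" "set (olist :: 'd option list) = UNIV"
proof -
  have "\<exists>xs. distinct xs \<and> set xs = (UNIV :: 'd option set)"
    using finite_distinct_list[of "UNIV :: 'd option set"] by auto
  from someI_ex[OF this] show "distinct (olist :: 'd::finite option list)" "set (olist :: 'd option list) = UNIV"
    unfolding olist_def by auto
qed

lemma sum_list_olist:
  fixes f :: "'d::finite option \<Rightarrow> 'a::comm_monoid_add"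
  shows "sum_list (map f (olist :: 'd option list)) = (\<Sum>v\<in>UNIV. f v)"
proof -
  have "sum_list (map f (olist :: 'd option list)) = sum f (set (olist :: 'd option list))"
    by (rule sum_list_distinct_conv_sum_set[OF olist(1)])
  also have "set (olist :: 'd option list) = UNIV" by (rule olist(2))
  finally show ?thesis .
qed

lemma sum_list_upt: "sum_list (map f [0..<n]) = (\<Sum>j<n. f j)"
  by (simp add: sum_list_distinct_conv_sum_set atLeast0LessThan)

definition incr :: "nat \<Rightarrow> ('d option \<times> nat) list \<Rightarrow> ('d option \<times> nat) list" where
  "incr j \<tau> = \<tau>[j := (fst (\<tau> ! j), Suc (snd (\<tau> ! j)))]"

lemma incr_simps[simp]: "incr 0 ((v, q) # \<tau>) = (v, Suc q) # \<tau>" "incr (Suc j) (x # \<tau>) = x # incr j \<tau>"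
  by (simp_all add: incr_def)

lemma map_fst_incr[simp]: "map fst (incr j \<tau>) = map fst \<tau>"
  by (simp add: incr_def map_update) (metis list_update_beyond list_update_id length_map not_le nth_map)

lemma length_incr[simp]: "length (incr j \<tau>) = length \<tau>"
  by (simp add: incr_def)

lemma sum_incr: "j < length \<tau> \<Longrightarrow> sum_list (map snd (incr j \<tau>)) = Suc (sum_list (map snd \<tau>))"
proof (induction \<tau> arbitrary: j)
  case Nil then show ?case by simp
next
  case (Cons x \<tau>)
  then show ?case by (cases x; cases j) auto
qed

lemma set_incr: "x \<in> set (incr j \<tau>) \<Longrightarrow> x \<in> set \<tau> \<or> (\<exists>y\<in>set \<tau>. x = (fst y, Suc (snd y)))"
  unfolding incr_def
  by (cases "j < length \<tau>") (auto simp: list_update_beyond dest: set_update_subset_insert[THEN subsetD])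

definition dT :: "('d::finite option \<times> nat) list \<Rightarrow> ('d option \<times> nat) list list" where
  "dT \<tau> = map (\<lambda>v. (v, 1) # \<tau>) olist @ map (\<lambda>j. incr j \<tau>) [0..<length \<tau>]"

fun Tl :: "nat \<Rightarrow> ('d::finite option \<times> nat) list list" where
  "Tl 0 = [[]]"
| "Tl (Suc p) = concat (map dT (Tl p))"

lemma Tl_inv: "\<tau> \<in> set (Tl p) \<Longrightarrow> sum_list (map snd \<tau>) = p \<and> (\<forall>x\<in>set \<tau>. 1 \<le> snd x)"
proof (induction p arbitrary: \<tau>)
  case 0 then show ?case by simp
next
  case (Suc p)
  then obtain \<sigma> where \<sigma>: "\<sigma> \<in> set (Tl p)" "\<tau> \<in> set (dT \<sigma>)" by auto
  note IH = Suc.IH[OF \<sigma>(1)]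
  from \<sigma>(2) consider v where "\<tau> = (v, 1) # \<sigma>" | j where "j < length \<sigma>" "\<tau> = incr j \<sigma>"
    unfolding dT_def by auto
  then show ?case
  proof cases
    case 1 then show ?thesis using IH by auto
  next
    case 2 then show ?thesis using IH sum_incr[of j \<sigma>] by (auto dest!: set_incr)
  qed
qed

lemma Tl_le: "\<tau> \<in> set (Tl p) \<Longrightarrow> x \<in> set \<tau> \<Longrightarrow> snd x \<le> p"
  using Tl_inv[of \<tau> p] member_le_sum_list[of "snd x" "map snd \<tau>"] by auto

lemma Tl_length: "\<tau> \<in> set (Tl p) \<Longrightarrow> length \<tau> \<le> p"
proof -
  assume a: "\<tau> \<in> set (Tl p)"
  have "length \<tau> = (\<Sum>x\<leftarrow>\<tau>. 1)" by (simp add: sum_list_triv)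
  also have "\<dots> \<le> sum_list (map snd \<tau>)" using Tl_inv[OF a] by (intro sum_list_mono) auto
  finally show ?thesis using Tl_inv[OF a] by simp
qed

definition Pt :: "(real \<Rightarrow> real^'d) \<Rightarrow> ('d option \<times> nat) list \<Rightarrow> real \<Rightarrow> real" where
  "Pt F \<tau> t = prod_list (map (\<lambda>(v, q). cd v (gam F q t)) \<tau>)"

definition tval :: "((real^'d) \<times> real \<Rightarrow> 'b::real_normed_vector) \<Rightarrow> (real \<Rightarrow> real^'d) \<Rightarrow> ('d option \<times> nat) list \<Rightarrow> real \<Rightarrow> 'b" where
  "tval \<Phi> F \<tau> t = Pt F \<tau> t *\<^sub>R PP (map fst \<tau>) \<Phi> (gam F 0 t)"

lemma Pt_Cons[simp]: "Pt F ((v, q) # \<tau>) t = cd v (gam F q t) * Pt F \<tau> t"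
  by (simp add: Pt_def)

lemma Pt_deriv:
  assumes "\<forall>x\<in>set \<tau>. (vderiv_n (snd x) F has_vector_derivative vderiv_n (Suc (snd x)) F t) (at t)"
  shows "(Pt F \<tau> has_real_derivative (\<Sum>j<length \<tau>. Pt F (incr j \<tau>) t)) (at t)"
  using assms
proof (induction \<tau>)
  case Nil
  then show ?case by (simp add: Pt_def[abs_def])
next
  case (Cons x \<tau>)
  obtain v q where x: "x = (v, q)" by (cases x)
  have dq: "(vderiv_n q F has_vector_derivative vderiv_n (Suc q) F t) (at t)"
    using Cons.prems x by simp
  have d1: "((\<lambda>t. cd v (gam F q t)) has_real_derivative cd v (gam F (Suc q) t)) (at t)"
    using bounded_linear.has_vector_derivative[OF bl_cd[of v] gam_deriv[OF dq]]
    by (simp only: has_real_derivative_iff_has_vector_derivative)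
  have d2: "(Pt F \<tau> has_real_derivative (\<Sum>j<length \<tau>. Pt F (incr j \<tau>) t)) (at t)"
    using Cons by auto
  have "((\<lambda>t. cd v (gam F q t) * Pt F \<tau> t) has_real_derivative
        cd v (gam F q t) * (\<Sum>j<length \<tau>. Pt F (incr j \<tau>) t) + cd v (gam F (Suc q) t) * Pt F \<tau> t) (at t)"
    by (rule DERIV_mult'[OF d1 d2])
  moreover have "(\<lambda>t. cd v (gam F q t) * Pt F \<tau> t) = Pt F (x # \<tau>)"
    by (simp add: x fun_eq_iff)
  moreover have "cd v (gam F q t) * (\<Sum>j<length \<tau>. Pt F (incr j \<tau>) t) + cd v (gam F (Suc q) t) * Pt F \<tau> t
      = (\<Sum>j<length (x # \<tau>). Pt F (incr j (x # \<tau>)) t)"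
    unfolding x length_Cons sum.lessThan_Suc_shift by (simp add: sum_distrib_left del: sum.lessThan_Suc)
  ultimately show ?case by simp
qed

lemma PP_chain:
  assumes hyp: "\<And>ws p. p \<in> W \<Longrightarrow> (PP ws \<Phi> has_derivative (\<lambda>h. \<Sum>v\<in>UNIV. cd v h *\<^sub>R PP (v # ws) \<Phi> p)) (at p)"
    and W: "gam F 0 t \<in> W"
    and F1: "(vderiv_n 0 F has_vector_derivative vderiv_n 1 F t) (at t)"
  shows "((\<lambda>t. PP ws \<Phi> (gam F 0 t)) has_vector_derivative
           (\<Sum>v\<in>UNIV. cd v (gam F 1 t) *\<^sub>R PP (v # ws) \<Phi> (gam F 0 t))) (at t)"
proof -
  have g: "(gam F 0 has_derivative (\<lambda>h. h *\<^sub>R gam F 1 t)) (at t)"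
    using gam_deriv[of 0 F t] F1 by (simp add: has_vector_derivative_def)
  have "((\<lambda>t. PP ws \<Phi> (gam F 0 t)) has_derivative
      (\<lambda>h. \<Sum>v\<in>UNIV. cd v (h *\<^sub>R gam F 1 t) *\<^sub>R PP (v # ws) \<Phi> (gam F 0 t))) (at t)"
    by (rule has_derivative_compose[OF g hyp[OF W]])
  moreover have "(\<lambda>h. \<Sum>v\<in>UNIV. cd v (h *\<^sub>R gam F 1 t) *\<^sub>R PP (v # ws) \<Phi> (gam F 0 t))
      = (\<lambda>h. h *\<^sub>R (\<Sum>v\<in>UNIV. cd v (gam F 1 t) *\<^sub>R PP (v # ws) \<Phi> (gam F 0 t)))"
    by (simp add: fun_eq_iff cd_linear scaleR_sum_right)
  ultimately show ?thesis by (simp add: has_vector_derivative_def)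
qed

lemma tval_deriv:
  assumes hyp: "\<And>ws p. p \<in> W \<Longrightarrow> (PP ws \<Phi> has_derivative (\<lambda>h. \<Sum>v\<in>UNIV. cd v h *\<^sub>R PP (v # ws) \<Phi> p)) (at p)"
    and W: "gam F 0 t \<in> W"
    and F1: "(vderiv_n 0 F has_vector_derivative vderiv_n 1 F t) (at t)"
    and Fq: "\<forall>x\<in>set \<tau>. (vderiv_n (snd x) F has_vector_derivative vderiv_n (Suc (snd x)) F t) (at t)"
  shows "(tval \<Phi> F \<tau> has_vector_derivative sum_list (map (\<lambda>\<sigma>. tval \<Phi> F \<sigma> t) (dT \<tau>))) (at t)"
proof -
  have "((\<lambda>t. Pt F \<tau> t *\<^sub>R PP (map fst \<tau>) \<Phi> (gam F 0 t)) has_vector_derivative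
      Pt F \<tau> t *\<^sub>R (\<Sum>v\<in>UNIV. cd v (gam F 1 t) *\<^sub>R PP (v # map fst \<tau>) \<Phi> (gam F 0 t))
      + (\<Sum>j<length \<tau>. Pt F (incr j \<tau>) t) *\<^sub>R PP (map fst \<tau>) \<Phi> (gam F 0 t)) (at t)"
    by (rule has_vector_derivative_scaleR[OF Pt_deriv[OF Fq] PP_chain[OF hyp W F1]])
  moreover have "Pt F \<tau> t *\<^sub>R (\<Sum>v\<in>UNIV. cd v (gam F 1 t) *\<^sub>R PP (v # map fst \<tau>) \<Phi> (gam F 0 t))
      + (\<Sum>j<length \<tau>. Pt F (incr j \<tau>) t) *\<^sub>R PP (map fst \<tau>) \<Phi> (gam F 0 t)
      = sum_list (map (\<lambda>\<sigma>. tval \<Phi> F \<sigma> t) (dT \<tau>))"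
    by (simp add: dT_def sum_list_olist sum_list_upt tval_def scaleR_sum_right scaleR_sum_left mult.commute)
  ultimately show ?thesis by (simp add: tval_def[abs_def])
qed

lemma sum_list_concat_map: "sum_list (map g (concat xss)) = sum_list (map (\<lambda>xs. sum_list (map g xs)) xss)"
  by (induction xss) auto

lemma has_vector_derivative_sum_list:
  assumes "\<And>x. x \<in> set xs \<Longrightarrow> (f x has_vector_derivative f' x) (at t)"
  shows "((\<lambda>t. sum_list (map (\<lambda>x. f x t) xs)) has_vector_derivative sum_list (map f' xs)) (at t)"
  using assms
proof (induction xs)
  case Nil then show ?case by (simp add: has_vector_derivative_const)
next
  case (Cons x xs)
  then show ?case by (auto intro!: has_vector_derivative_add)
qed

lemma chain_formula:
  fixes \<Phi> :: "(real^'d) \<times> real \<Rightarrow> 'b::real_normed_vector" and F :: "real \<Rightarrow> real^'d"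
  assumes hyp: "\<And>ws p. p \<in> W \<Longrightarrow> (PP ws \<Phi> has_derivative (\<lambda>h. \<Sum>v\<in>UNIV. cd v h *\<^sub>R PP (v # ws) \<Phi> p)) (at p)"
    and T0: "open T0"
    and FW: "\<And>t. t \<in> T0 \<Longrightarrow> (F t, t) \<in> W"
    and Fd: "\<And>q t. q \<le> K \<Longrightarrow> t \<in> T0 \<Longrightarrow> (vderiv_n q F has_vector_derivative vderiv_n (Suc q) F t) (at t)"
  shows "\<And>p t. p \<le> Suc K \<Longrightarrow> t \<in> T0 \<Longrightarrow> vderiv_n p (\<lambda>t. \<Phi> (F t, t)) t = sum_list (map (\<lambda>\<tau>. tval \<Phi> F \<tau> t) (Tl p))"
    and "\<And>p t. p \<le> K \<Longrightarrow> t \<in> T0 \<Longrightarrow> (vderiv_n p (\<lambda>t. \<Phi> (F t, t)) has_vector_derivative vderiv_n (Suc p) (\<lambda>t. \<Phi> (F t, t)) t) (at t)"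
proof -
  define S where "S p t = sum_list (map (\<lambda>\<tau>. tval \<Phi> F \<tau> t) (Tl p))" for p t
  define h where "h = (\<lambda>t. \<Phi> (F t, t))"
  have Sd: "(S p has_vector_derivative S (Suc p) t) (at t)" if p: "p \<le> K" and t: "t \<in> T0" for p t
  proof -
    have "((\<lambda>t. sum_list (map (\<lambda>\<tau>. tval \<Phi> F \<tau> t) (Tl p))) has_vector_derivative
        sum_list (map (\<lambda>\<tau>. sum_list (map (\<lambda>\<sigma>. tval \<Phi> F \<sigma> t) (dT \<tau>))) (Tl p))) (at t)"
    proof (rule has_vector_derivative_sum_list)
      fix \<tau> :: "('d option \<times> nat) list" assume \<tau>: "\<tau> \<in> set (Tl p)"
      show "(tval \<Phi> F \<tau> has_vector_derivative sum_list (map (\<lambda>\<sigma>. tval \<Phi> F \<sigma> t) (dT \<tau>))) (at t)"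
      proof (rule tval_deriv[OF hyp])
        show "gam F 0 t \<in> W" using FW[OF t] by (simp add: gam0)
        show "(vderiv_n 0 F has_vector_derivative vderiv_n 1 F t) (at t)" using Fd[of 0 t] t by simp
        show "\<forall>x\<in>set \<tau>. (vderiv_n (snd x) F has_vector_derivative vderiv_n (Suc (snd x)) F t) (at t)"
          using Tl_le[OF \<tau>] p t Fd by (meson order_trans)
      qed
    qed
    moreover have "sum_list (map (\<lambda>\<tau>. sum_list (map (\<lambda>\<sigma>. tval \<Phi> F \<sigma> t) (dT \<tau>))) (Tl p)) = S (Suc p) t"
      by (simp add: S_def sum_list_concat_map o_def)
    ultimately show ?thesis by (simp add: S_def[abs_def])
  qed
  have main: "\<forall>t\<in>T0. vderiv_n p h t = S p t" if "p \<le> Suc K" for p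
    using that
  proof (induction p)
    case 0
    then show ?case by (simp add: S_def h_def tval_def Pt_def gam0)
  next
    case (Suc p)
    show ?case
    proof
      fix t assume t: "t \<in> T0"
      have "(vderiv_n p h has_vector_derivative S (Suc p) t) (at t)"
        by (rule has_vector_derivative_transform_within_open[OF Sd T0 t]) (use Suc t in auto)
      then show "vderiv_n (Suc p) h t = S (Suc p) t" by (simp add: vector_derivative_at)
    qed
  qed
  show "vderiv_n p (\<lambda>t. \<Phi> (F t, t)) t = sum_list (map (\<lambda>\<tau>. tval \<Phi> F \<tau> t) (Tl p))"
    if "p \<le> Suc K" "t \<in> T0" for p t
    using main[OF that(1)] that(2) by (simp add: S_def h_def)
  show "(vderiv_n p (\<lambda>t. \<Phi> (F t, t)) has_vector_derivative vderiv_n (Suc p) (\<lambda>t. \<Phi> (F t, t)) t) (at t)"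
    if p: "p \<le> K" and t: "t \<in> T0" for p t
  proof -
    have "(vderiv_n p h has_vector_derivative S (Suc p) t) (at t)"
      by (rule has_vector_derivative_transform_within_open[OF Sd[OF p t] T0 t]) (use main p in auto)
    moreover have "S (Suc p) t = vderiv_n (Suc p) h t" using main[of "Suc p"] p t by auto
    ultimately show ?thesis by (simp add: h_def)
  qed
qed

lemma norm_sum_list_le:
  assumes "\<And>x. x \<in> set xs \<Longrightarrow> norm (f x) \<le> B"
  shows "norm (sum_list (map f xs)) \<le> real (length xs) * B"
  using assms
proof (induction xs)
  case Nil then show ?case by simp
next
  case (Cons x xs)
  have "norm (sum_list (map f (x # xs))) \<le> norm (f x) + norm (sum_list (map f xs))"
    by (simp add: norm_triangle_ineq)
  also have "\<dots> \<le> B + real (length xs) * B" using Cons by (intro add_mono) auto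
  finally show ?case by (simp add: algebra_simps)
qed

lemma length_olist: "length (olist :: 'd::finite option list) = CARD('d option)"
  using distinct_card[OF olist(1)[where 'd='d]] olist(2)[where 'd='d] by simp

lemma length_Tl: "real (length (Tl p :: ('d::finite option \<times> nat) list list)) \<le> (real CARD('d option) + p) ^ p"
proof (induction p)
  case 0 then show ?case by simp
next
  case (Suc p)
  define Dc where "Dc = real CARD('d option)"
  have "real (length (Tl (Suc p) :: ('d option \<times> nat) list list))
      = (\<Sum>\<tau>\<leftarrow>(Tl p :: ('d option \<times> nat) list list). real (length (dT \<tau>)))"
    by (simp add: length_concat o_def sum_list_of_nat[symmetric])
  also have "\<dots> \<le> real (length (Tl p :: ('d option \<times> nat) list list)) * (Dc + p)"
  proof (rule order_trans[OF _ norm_sum_list_le[of _ _ "Dc + p"]])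
    show "(\<Sum>\<tau>\<leftarrow>(Tl p :: ('d option \<times> nat) list list). real (length (dT \<tau>)))
        \<le> norm (\<Sum>\<tau>\<leftarrow>(Tl p :: ('d option \<times> nat) list list). real (length (dT \<tau>)))" by simp
    fix \<tau> :: "('d option \<times> nat) list" assume "\<tau> \<in> set (Tl p)"
    then show "norm (real (length (dT \<tau>))) \<le> Dc + p"
      using Tl_length[of \<tau> p] by (simp add: dT_def length_olist Dc_def)
  qed
  also have "\<dots> \<le> (Dc + p) ^ p * (Dc + p)"
    using Suc.IH by (intro mult_right_mono) (auto simp: Dc_def)
  also have "\<dots> = (Dc + p) ^ Suc p" by simp
  also have "\<dots> \<le> (Dc + Suc p) ^ Suc p"
    by (intro power_mono) (auto simp: Dc_def)
  finally show ?case by (simp add: Dc_def)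
qed

lemma Pt_bound:
  assumes A0: "0 \<le> A" and "\<And>x. x \<in> set \<tau> \<Longrightarrow> norm (gam F (snd x) t) \<le> 2 * A ^ (snd x)"
  shows "\<bar>Pt F \<tau> t\<bar> \<le> 2 ^ length \<tau> * A ^ sum_list (map snd \<tau>)"
  using assms
proof (induction \<tau>)
  case Nil then show ?case by (simp add: Pt_def)
next
  case (Cons x \<tau>)
  obtain v q where x: "x = (v, q)" by (cases x)
  have "\<bar>Pt F (x # \<tau>) t\<bar> = \<bar>cd v (gam F q t)\<bar> * \<bar>Pt F \<tau> t\<bar>" by (simp add: x abs_mult)
  also have "\<dots> \<le> (2 * A ^ q) * (2 ^ length \<tau> * A ^ sum_list (map snd \<tau>))"
  proof (rule mult_mono)
    show "\<bar>cd v (gam F q t)\<bar> \<le> 2 * A ^ q"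
      using Cons.prems(2)[of x] x abs_cd_le[of v "gam F q t"] by simp
    show "\<bar>Pt F \<tau> t\<bar> \<le> 2 ^ length \<tau> * A ^ sum_list (map snd \<tau>)"
      using Cons.IH Cons.prems by simp
  qed (use A0 in auto)
  also have "\<dots> = 2 ^ length (x # \<tau>) * A ^ sum_list (map snd (x # \<tau>))"
    by (simp add: x power_add)
  finally show ?case .
qed

lemma chain_bound:
  fixes \<Phi> :: "(real^'d) \<times> real \<Rightarrow> 'b::real_normed_vector" and F :: "real \<Rightarrow> real^'d"
  assumes hyp: "\<And>ws p. p \<in> W \<Longrightarrow> (PP ws \<Phi> has_derivative (\<lambda>h. \<Sum>v\<in>UNIV. cd v h *\<^sub>R PP (v # ws) \<Phi> p)) (at p)"
    and T0: "open T0"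
    and FW: "\<And>t. t \<in> T0 \<Longrightarrow> (F t, t) \<in> W"
    and Fd: "\<And>q t. q \<le> K \<Longrightarrow> t \<in> T0 \<Longrightarrow> (vderiv_n q F has_vector_derivative vderiv_n (Suc q) F t) (at t)"
    and Mb: "\<And>ws t. length ws \<le> Suc K \<Longrightarrow> t \<in> T0 \<Longrightarrow> norm (PP ws \<Phi> (F t, t)) \<le> Mb"
    and A: "A \<ge> 1"
    and Fb: "\<And>q t. 1 \<le> q \<Longrightarrow> q \<le> Suc K \<Longrightarrow> t \<in> T0 \<Longrightarrow> norm (vderiv_n q F t) \<le> A ^ q"
    and p: "p \<le> Suc K" and t: "t \<in> T0"
  shows "norm (vderiv_n p (\<lambda>t. \<Phi> (F t, t)) t) \<le> (real CARD('d option) + p) ^ p * (2 ^ p * A ^ p * Mb)"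
proof -
  have "norm (PP [] \<Phi> (F t, t)) \<le> Mb" using Mb[of "[]" t] t by simp
  then have Mb0: "0 \<le> Mb" by (rule order_trans[OF norm_ge_zero])
  have gb: "norm (gam F q t) \<le> 2 * A ^ q" if "1 \<le> q" "q \<le> Suc K" for q
  proof -
    have "norm (gam F q t) \<le> norm (vderiv_n q F t) + norm (if q = 0 then t else if q = 1 then 1 else (0::real))"
      unfolding gam_def by (rule norm_Pair_le)
    also have "\<dots> \<le> A ^ q + 1" using Fb[OF that t] that by (intro add_mono) auto
    also have "\<dots> \<le> 2 * A ^ q" using A one_le_power[of A q] by simp
    finally show ?thesis .
  qed
  have tb: "norm (tval \<Phi> F \<tau> t) \<le> 2 ^ p * A ^ p * Mb" if \<tau>: "\<tau> \<in> set (Tl p)" for \<tau> :: "('d option \<times> nat) list"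
  proof -
    have "\<bar>Pt F \<tau> t\<bar> \<le> 2 ^ length \<tau> * A ^ sum_list (map snd \<tau>)"
    proof (rule Pt_bound)
      show "0 \<le> A" using A by simp
      fix x assume x: "x \<in> set \<tau>"
      have "1 \<le> snd x" using Tl_inv[OF \<tau>] x by auto
      moreover have "snd x \<le> Suc K" using Tl_le[OF \<tau> x] p by simp
      ultimately show "norm (gam F (snd x) t) \<le> 2 * A ^ snd x" by (rule gb)
    qed
    also have "\<dots> \<le> 2 ^ p * A ^ p"
      using Tl_inv[OF \<tau>] Tl_length[OF \<tau>] A by (auto intro!: power_increasing)
    finally have P: "\<bar>Pt F \<tau> t\<bar> \<le> 2 ^ p * A ^ p" .
    have Q: "norm (PP (map fst \<tau>) \<Phi> (gam F 0 t)) \<le> Mb"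
      using Mb[of "map fst \<tau>" t] Tl_length[OF \<tau>] p t by (simp add: gam0)
    show ?thesis unfolding tval_def using P Q Mb0 by (simp add: mult_mono)
  qed
  have "vderiv_n p (\<lambda>t. \<Phi> (F t, t)) t = sum_list (map (\<lambda>\<tau>. tval \<Phi> F \<tau> t) (Tl p))"
    by (rule chain_formula(1)[OF hyp T0 FW Fd p t])
  also have "norm \<dots> \<le> real (length (Tl p :: ('d option \<times> nat) list list)) * (2 ^ p * A ^ p * Mb)"
    by (rule norm_sum_list_le) (rule tb)
  also have "\<dots> \<le> (real CARD('d option) + p) ^ p * (2 ^ p * A ^ p * Mb)"
    using length_Tl[where 'd='d, of p] Mb0 A by (intro mult_right_mono) auto
  finally show ?thesis .
qed


lemma vderiv_const: "vderiv_n (Suc q) (\<lambda>t. c) = (\<lambda>t. 0)"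
proof (induction q)
  case 0
  then show ?case by (simp add: fun_eq_iff vector_derivative_const_at)
next
  case (Suc q)
  then show ?case by (simp add: fun_eq_iff vector_derivative_const_at)
qed

lemma word_smooth:
  fixes f :: "'i \<Rightarrow> real^'d \<Rightarrow> real \<Rightarrow> real^'d"
  assumes hyp: "\<And>i ws p. i \<in> Lam \<Longrightarrow> p \<in> W i \<Longrightarrow>
      (PP ws (\<lambda>y. f i (fst y) (snd y)) has_derivative
        (\<lambda>h. \<Sum>v\<in>UNIV. cd v h *\<^sub>R PP (v # ws) (\<lambda>y. f i (fst y) (snd y)) p)) (at p)"
    and T0: "open T0"
    and KV: "\<And>i x t. i \<in> Lam \<Longrightarrow> x \<in> C \<Longrightarrow> t \<in> T0 \<Longrightarrow> (x, t) \<in> W i \<and> f i x t \<in> C"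
    and x0: "x0 \<in> C"
    and Mb: "\<And>i ws x t. i \<in> Lam \<Longrightarrow> length ws \<le> Suc K \<Longrightarrow> x \<in> C \<Longrightarrow> t \<in> T0 \<Longrightarrow>
               norm (PP ws (\<lambda>y. f i (fst y) (snd y)) (x, t)) \<le> Mb"
    and R1: "R \<ge> 1"
    and R: "\<And>p. 1 \<le> p \<Longrightarrow> p \<le> Suc K \<Longrightarrow> (real CARD('d option) + p) ^ p * (2 ^ p * Mb) \<le> R ^ p"
  shows "w \<in> lists Lam \<Longrightarrow> (\<forall>t\<in>T0. comp_word f w t x0 \<in> C) \<and>
    (\<forall>q t. q \<le> K \<longrightarrow> t \<in> T0 \<longrightarrow> (vderiv_n q (\<lambda>t. comp_word f w t x0) has_vector_derivative
         vderiv_n (Suc q) (\<lambda>t. comp_word f w t x0) t) (at t)) \<and>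
    (\<forall>q t. 1 \<le> q \<longrightarrow> q \<le> Suc K \<longrightarrow> t \<in> T0 \<longrightarrow> norm (vderiv_n q (\<lambda>t. comp_word f w t x0) t) \<le> (R ^ length w) ^ q)"
proof (induction w)
  case Nil
  have F: "(\<lambda>t. comp_word f [] t x0) = (\<lambda>t. x0)" by simp
  have D: "(vderiv_n q (\<lambda>t. x0) has_vector_derivative vderiv_n (Suc q) (\<lambda>t. x0) t) (at t)" for q t
  proof (cases q)
    case 0
    then show ?thesis by (simp only: vderiv_n.simps(1) vderiv_const) (rule has_vector_derivative_const)
  next
    case (Suc n)
    then show ?thesis by (simp only: vderiv_const) (rule has_vector_derivative_const)
  qed
  have B: "norm (vderiv_n q (\<lambda>t. x0) t) \<le> (R ^ length []) ^ q" if "1 \<le> q" for q t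
    using that by (cases q) (simp_all only: vderiv_const, simp_all)
  show ?case unfolding F using x0 D B by simp
next
  case (Cons i w)
  have i: "i \<in> Lam" and wL: "w \<in> lists Lam" using Cons.prems by auto
  note IH = Cons.IH[OF wL]
  define F where "F = (\<lambda>t. comp_word f w t x0)"
  define \<Phi> where "\<Phi> = (\<lambda>y. f i (fst y) (snd y))"
  have FC: "\<And>t. t \<in> T0 \<Longrightarrow> F t \<in> C" using IH by (simp add: F_def)
  have Fd: "\<And>q t. q \<le> K \<Longrightarrow> t \<in> T0 \<Longrightarrow> (vderiv_n q F has_vector_derivative vderiv_n (Suc q) F t) (at t)"
    using IH by (simp add: F_def)
  have Fb: "\<And>q t. 1 \<le> q \<Longrightarrow> q \<le> Suc K \<Longrightarrow> t \<in> T0 \<Longrightarrow> norm (vderiv_n q F t) \<le> (R ^ length w) ^ q"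
    using IH by (simp add: F_def)
  have eq: "(\<lambda>t. comp_word f (i # w) t x0) = (\<lambda>t. \<Phi> (F t, t))"
    by (simp add: fun_eq_iff F_def \<Phi>_def)
  have hyp': "\<And>ws p. p \<in> W i \<Longrightarrow> (PP ws \<Phi> has_derivative (\<lambda>h. \<Sum>v\<in>UNIV. cd v h *\<^sub>R PP (v # ws) \<Phi> p)) (at p)"
    unfolding \<Phi>_def by (rule hyp[OF i])
  have FW: "\<And>t. t \<in> T0 \<Longrightarrow> (F t, t) \<in> W i" using KV[OF i FC] by blast
  have C: "\<forall>t\<in>T0. comp_word f (i # w) t x0 \<in> C"
    using KV[OF i FC] by (simp add: F_def)
  have D: "\<forall>q t. q \<le> K \<longrightarrow> t \<in> T0 \<longrightarrow> (vderiv_n q (\<lambda>t. comp_word f (i # w) t x0) has_vector_derivative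
         vderiv_n (Suc q) (\<lambda>t. comp_word f (i # w) t x0) t) (at t)"
    unfolding eq using chain_formula(2)[OF hyp' T0 FW Fd] by blast
  have B: "\<forall>q t. 1 \<le> q \<longrightarrow> q \<le> Suc K \<longrightarrow> t \<in> T0 \<longrightarrow>
      norm (vderiv_n q (\<lambda>t. comp_word f (i # w) t x0) t) \<le> (R ^ length (i # w)) ^ q"
  proof (intro allI impI)
    fix q t assume q1: "1 \<le> q" and qK: "q \<le> Suc K" and t: "t \<in> T0"
    have A1: "R ^ length w \<ge> 1" using R1 by simp
    have "norm (vderiv_n q (\<lambda>t. \<Phi> (F t, t)) t) \<le> (real CARD('d option) + q) ^ q * (2 ^ q * (R ^ length w) ^ q * Mb)"
    proof (rule chain_bound[OF hyp' T0 FW Fd _ A1 Fb qK t])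
      show "norm (PP ws \<Phi> (F t, t)) \<le> Mb" if "length ws \<le> Suc K" "t \<in> T0" for ws t
        unfolding \<Phi>_def by (rule Mb[OF i that(1) FC[OF that(2)] that(2)])
    qed
    also have "\<dots> = ((real CARD('d option) + q) ^ q * (2 ^ q * Mb)) * (R ^ length w) ^ q"
      by (simp add: algebra_simps)
    also have "\<dots> \<le> R ^ q * (R ^ length w) ^ q"
      by (intro mult_right_mono R q1 qK) (use R1 in simp)
    also have "\<dots> = (R ^ length (i # w)) ^ q"
      by (simp add: power_mult_distrib[symmetric])
    finally show "norm (vderiv_n q (\<lambda>t. comp_word f (i # w) t x0) t) \<le> (R ^ length (i # w)) ^ q"
      unfolding eq .
  qed
  show ?case using C D B by blast
qed

lemma vderiv_diff:
  fixes F G :: "real \<Rightarrow> 'a::real_normed_vector"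
  assumes T0: "open T0"
    and Fd: "\<And>q t. q \<le> K \<Longrightarrow> t \<in> T0 \<Longrightarrow> (vderiv_n q F has_vector_derivative vderiv_n (Suc q) F t) (at t)"
    and Gd: "\<And>q t. q \<le> K \<Longrightarrow> t \<in> T0 \<Longrightarrow> (vderiv_n q G has_vector_derivative vderiv_n (Suc q) G t) (at t)"
  shows "\<And>p t. p \<le> Suc K \<Longrightarrow> t \<in> T0 \<Longrightarrow> vderiv_n p (\<lambda>t. F t - G t) t = vderiv_n p F t - vderiv_n p G t"
    and "\<And>p t. p \<le> K \<Longrightarrow> t \<in> T0 \<Longrightarrow> (vderiv_n p (\<lambda>t. F t - G t) has_vector_derivative vderiv_n (Suc p) (\<lambda>t. F t - G t) t) (at t)"
proof -
  have main: "\<forall>t\<in>T0. vderiv_n p (\<lambda>t. F t - G t) t = vderiv_n p F t - vderiv_n p G t" if "p \<le> Suc K" for p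
    using that
  proof (induction p)
    case 0 then show ?case by simp
  next
    case (Suc p)
    show ?case
    proof
      fix t assume t: "t \<in> T0"
      have d: "((\<lambda>t. vderiv_n p F t - vderiv_n p G t) has_vector_derivative vderiv_n (Suc p) F t - vderiv_n (Suc p) G t) (at t)"
        using Suc.prems t by (intro has_vector_derivative_diff Fd Gd) auto
      have "(vderiv_n p (\<lambda>t. F t - G t) has_vector_derivative vderiv_n (Suc p) F t - vderiv_n (Suc p) G t) (at t)"
        by (rule has_vector_derivative_transform_within_open[OF d T0 t]) (use Suc in auto)
      then show "vderiv_n (Suc p) (\<lambda>t. F t - G t) t = vderiv_n (Suc p) F t - vderiv_n (Suc p) G t"
        by (simp add: vector_derivative_at)
    qed
  qed
  show "vderiv_n p (\<lambda>t. F t - G t) t = vderiv_n p F t - vderiv_n p G t" if "p \<le> Suc K" "t \<in> T0" for p t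
    using main that by blast
  show "(vderiv_n p (\<lambda>t. F t - G t) has_vector_derivative vderiv_n (Suc p) (\<lambda>t. F t - G t) t) (at t)"
    if p: "p \<le> K" and t: "t \<in> T0" for p t
  proof -
    have d: "((\<lambda>t. vderiv_n p F t - vderiv_n p G t) has_vector_derivative vderiv_n (Suc p) F t - vderiv_n (Suc p) G t) (at t)"
      using p t by (intro has_vector_derivative_diff Fd Gd) auto
    have "(vderiv_n p (\<lambda>t. F t - G t) has_vector_derivative vderiv_n (Suc p) F t - vderiv_n (Suc p) G t) (at t)"
      by (rule has_vector_derivative_transform_within_open[OF d T0 t]) (use main p in auto)
    then show ?thesis using main[of "Suc p"] p t by simp
  qed
qed

lemma deriv_mono_lb:
  fixes h h' :: "real \<Rightarrow> real"
  assumes I: "is_interval I" and d: "\<And>t. t \<in> I \<Longrightarrow> (h has_real_derivative h' t) (at t)"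
    and c: "\<And>t. t \<in> I \<Longrightarrow> h' t \<ge> c"
    and s: "s \<in> I" and t: "t \<in> I" and st: "s \<le> t"
  shows "h t - h s \<ge> c * (t - s)"
proof (cases "s = t")
  case True then show ?thesis by simp
next
  case False
  then have st': "s < t" using st by simp
  have sub: "x \<in> I" if "s \<le> x" "x \<le> t" for x
    using I s t that unfolding is_interval_1 by blast
  obtain z where z: "s < z" "z < t" "h t - h s = (t - s) * h' z"
    using MVT2[OF st', of h h'] d sub by blast
  have "h' z \<ge> c" using c sub z by auto
  then show ?thesis using z st' by (simp add: mult.commute mult_left_mono)
qed

lemma diam_le_bounded:
  fixes S :: "real set"
  assumes "0 \<le> d" "\<And>x y. x \<in> S \<Longrightarrow> y \<in> S \<Longrightarrow> \<bar>x - y\<bar> \<le> d"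
  shows "bounded S \<and> diameter S \<le> d"
proof
  show "diameter S \<le> d" using assms by (intro diameter_le) (auto simp: dist_norm)
  show "bounded S"
  proof (cases "S = {}")
    case True then show ?thesis by simp
  next
    case False
    then obtain x where "x \<in> S" by auto
    then show ?thesis unfolding bounded_def using assms(2)[of x] by (auto simp: dist_real_def)
  qed
qed

lemma sublevel:
  fixes G :: "nat \<Rightarrow> real \<Rightarrow> real"
  assumes "is_interval I" "c > 0" "\<delta> > 0"
    "\<And>q t. q < Suc m \<Longrightarrow> t \<in> I \<Longrightarrow> (G q has_real_derivative G (Suc q) t) (at t)"
    "\<And>t. t \<in> I \<Longrightarrow> G (Suc m) t \<ge> c"
  shows "\<exists>\<C>. finite \<C> \<and> card \<C> \<le> 3 ^ Suc m \<and>
     (\<forall>A\<in>\<C>. bounded A \<and> diameter A \<le> 2 * (\<delta> / c) powr (1 / real (Suc m))) \<and>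
     {t\<in>I. \<bar>G 0 t\<bar> \<le> \<delta>} \<subseteq> \<Union>\<C>"
  using assms
proof (induction m arbitrary: G c I)
  case 0
  define S where "S = {t\<in>I. \<bar>G 0 t\<bar> \<le> \<delta>}"
  have "bounded S \<and> diameter S \<le> 2 * (\<delta> / c)"
  proof (rule diam_le_bounded)
    show "0 \<le> 2 * (\<delta> / c)" using 0 by simp
    fix x y assume x: "x \<in> S" and y: "y \<in> S"
    have key: "\<bar>x - y\<bar> \<le> 2 * (\<delta> / c)" if "x \<in> S" "y \<in> S" "y \<le> x" for x y
    proof -
      have "G 0 x - G 0 y \<ge> c * (x - y)"
        by (rule deriv_mono_lb[OF 0(1), of "G 0" "G 1"]) (use 0 that S_def in auto)
      moreover have "G 0 x - G 0 y \<le> 2 * \<delta>" using that S_def by auto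
      ultimately have "c * (x - y) \<le> 2 * \<delta>" by linarith
      then show ?thesis using that 0 by (simp add: field_simps)
    qed
    show "\<bar>x - y\<bar> \<le> 2 * (\<delta> / c)"
      using key[OF x y] key[OF y x] by (cases "y \<le> x") (auto simp: abs_minus_commute)
  qed
  then show ?case using 0 by (intro exI[of _ "{S}"]) (auto simp: S_def)
next
  case (Suc m)
  define x where "x = \<delta> / c"
  have x0: "x > 0" using Suc.prems by (simp add: x_def)
  define \<beta> where "\<beta> = c * x powr (1 / real (Suc (Suc m)))"
  have \<beta>0: "\<beta> > 0" using Suc.prems x0 by (simp add: \<beta>_def)
  define M where "M = {t\<in>I. \<bar>G (Suc m) t\<bar> < \<beta>}"
  define IR where "IR = {t\<in>I. G (Suc m) t \<ge> \<beta>}"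
  define IL where "IL = {t\<in>I. G (Suc m) t \<le> - \<beta>}"
  have mono: "G (Suc m) t - G (Suc m) s \<ge> c * (t - s)" if "s \<in> I" "t \<in> I" "s \<le> t" for s t
    by (rule deriv_mono_lb[OF Suc.prems(1), of "G (Suc m)" "G (Suc (Suc m))"]) (use Suc.prems that in auto)
  have Mb: "bounded M \<and> diameter M \<le> 2 * (\<beta> / c)"
  proof (rule diam_le_bounded)
    show "0 \<le> 2 * (\<beta> / c)" using \<beta>0 Suc.prems by simp
    have key: "\<bar>s - t\<bar> \<le> 2 * (\<beta> / c)" if "s \<in> M" "t \<in> M" "s \<le> t" for s t
    proof -
      have "c * (t - s) \<le> G (Suc m) t - G (Suc m) s" using mono that M_def by auto
      also have "\<dots> \<le> 2 * \<beta>" using that M_def by auto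
      finally show ?thesis using that Suc.prems by (simp add: field_simps)
    qed
    fix s t assume "s \<in> M" "t \<in> M"
    then show "\<bar>s - t\<bar> \<le> 2 * (\<beta> / c)"
      using key by (cases "s \<le> t") (auto simp: abs_minus_commute)
  qed
  have diam_eq: "2 * (\<delta> / \<beta>) powr (1 / real (Suc m)) = 2 * (\<delta> / c) powr (1 / real (Suc (Suc m)))"
  proof -
    have "\<delta> / \<beta> = x / x powr (1 / real (Suc (Suc m)))"
      using Suc.prems by (simp add: \<beta>_def x_def field_simps)
    also have "\<dots> = x powr (1 - 1 / real (Suc (Suc m)))"
      using x0 by (simp add: powr_diff)
    also have "1 - 1 / real (Suc (Suc m)) = real (Suc m) / real (Suc (Suc m))"
      by (simp add: field_simps)
    finally have "(\<delta> / \<beta>) powr (1 / real (Suc m)) = (x powr (real (Suc m) / real (Suc (Suc m)))) powr (1 / real (Suc m))"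
      by simp
    also have "\<dots> = x powr (1 / real (Suc (Suc m)))"
      by (simp add: powr_powr)
    finally show ?thesis by (simp add: x_def)
  qed
  have Mdiam: "2 * (\<beta> / c) = 2 * (\<delta> / c) powr (1 / real (Suc (Suc m)))"
    using Suc.prems by (simp add: \<beta>_def x_def)
  have IRi: "is_interval IR"
    unfolding is_interval_1 IR_def
  proof (intro ballI allI impI, simp, intro conjI)
    fix a b y assume a: "a \<in> I \<and> \<beta> \<le> G (Suc m) a" and b: "b \<in> I \<and> \<beta> \<le> G (Suc m) b" and y: "a \<le> y \<and> y \<le> b"
    show yI: "y \<in> I" using Suc.prems(1) a b y unfolding is_interval_1 by blast
    show "\<beta> \<le> G (Suc m) y" using mono[of a y] a y yI Suc.prems by (smt (verit) mult_nonneg_nonneg)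
  qed
  have ILi: "is_interval IL"
    unfolding is_interval_1 IL_def
  proof (intro ballI allI impI, simp, intro conjI)
    fix a b y assume a: "a \<in> I \<and> G (Suc m) a \<le> - \<beta>" and b: "b \<in> I \<and> G (Suc m) b \<le> - \<beta>" and y: "a \<le> y \<and> y \<le> b"
    show yI: "y \<in> I" using Suc.prems(1) a b y unfolding is_interval_1 by blast
    show "G (Suc m) y \<le> - \<beta>" using mono[of y b] b y yI Suc.prems by (smt (verit) mult_nonneg_nonneg)
  qed
  obtain CR where CR: "finite CR" "card CR \<le> 3 ^ Suc m"
    "\<forall>A\<in>CR. bounded A \<and> diameter A \<le> 2 * (\<delta> / \<beta>) powr (1 / real (Suc m))"
    "{t\<in>IR. \<bar>G 0 t\<bar> \<le> \<delta>} \<subseteq> \<Union>CR"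
  proof -
    have "\<exists>\<C>. finite \<C> \<and> card \<C> \<le> 3 ^ Suc m \<and>
     (\<forall>A\<in>\<C>. bounded A \<and> diameter A \<le> 2 * (\<delta> / \<beta>) powr (1 / real (Suc m))) \<and>
     {t\<in>IR. \<bar>G 0 t\<bar> \<le> \<delta>} \<subseteq> \<Union>\<C>"
    proof (rule Suc.IH[OF IRi \<beta>0 Suc.prems(3)])
      show "(G q has_real_derivative G (Suc q) t) (at t)" if "q < Suc m" "t \<in> IR" for q t
        using Suc.prems(4)[of q t] that IR_def by auto
      show "\<beta> \<le> G (Suc m) t" if "t \<in> IR" for t using that IR_def by auto
    qed
    then show ?thesis using that by blast
  qed
  obtain CL where CL: "finite CL" "card CL \<le> 3 ^ Suc m"
    "\<forall>A\<in>CL. bounded A \<and> diameter A \<le> 2 * (\<delta> / \<beta>) powr (1 / real (Suc m))"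
    "{t\<in>IL. \<bar>(\<lambda>q t. - G q t) 0 t\<bar> \<le> \<delta>} \<subseteq> \<Union>CL"
  proof -
    have "\<exists>\<C>. finite \<C> \<and> card \<C> \<le> 3 ^ Suc m \<and>
     (\<forall>A\<in>\<C>. bounded A \<and> diameter A \<le> 2 * (\<delta> / \<beta>) powr (1 / real (Suc m))) \<and>
     {t\<in>IL. \<bar>(\<lambda>q t. - G q t) 0 t\<bar> \<le> \<delta>} \<subseteq> \<Union>\<C>"
    proof (rule Suc.IH[OF ILi \<beta>0 Suc.prems(3)])
      show "((\<lambda>t. - G q t) has_real_derivative - G (Suc q) t) (at t)" if "q < Suc m" "t \<in> IL" for q t
        using Suc.prems(4)[of q t] that IL_def by (auto intro: DERIV_minus)
      show "\<beta> \<le> - G (Suc m) t" if "t \<in> IL" for t using that IL_def by auto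
    qed
    then show ?thesis using that by blast
  qed
  define \<C> where "\<C> = insert M (CR \<union> CL)"
  show ?case
  proof (intro exI[of _ \<C>] conjI)
    show "finite \<C>" using CR CL by (simp add: \<C>_def)
    have "card \<C> \<le> Suc (card (CR \<union> CL))" unfolding \<C>_def by (rule card_insert_le_m1) auto
    also have "\<dots> \<le> Suc (card CR + card CL)" using card_Un_le[of CR CL] by simp
    also have "\<dots> \<le> 3 ^ Suc (Suc m)"
    proof -
      have "(1::nat) \<le> 3 ^ m" by simp
      moreover have "3 ^ Suc (Suc m) = 9 * (3::nat) ^ m" "3 ^ Suc m = 3 * (3::nat) ^ m" by simp_all
      ultimately show ?thesis using CR(2) CL(2) by linarith
    qed
    finally show "card \<C> \<le> 3 ^ Suc (Suc m)" .
    show "\<forall>A\<in>\<C>. bounded A \<and> diameter A \<le> 2 * (\<delta> / c) powr (1 / real (Suc (Suc m)))"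
      using Mb Mdiam CR(3) CL(3) diam_eq by (auto simp: \<C>_def)
    show "{t \<in> I. \<bar>G 0 t\<bar> \<le> \<delta>} \<subseteq> \<Union>\<C>"
    proof
      fix t assume t: "t \<in> {t \<in> I. \<bar>G 0 t\<bar> \<le> \<delta>}"
      consider "\<bar>G (Suc m) t\<bar> < \<beta>" | "G (Suc m) t \<ge> \<beta>" | "G (Suc m) t \<le> - \<beta>" by linarith
      then show "t \<in> \<Union>\<C>"
      proof cases
        case 1 then show ?thesis using t by (auto simp: \<C>_def M_def)
      next
        case 2 then have "t \<in> \<Union>CR" using CR(4) t IR_def by auto
        then show ?thesis by (auto simp: \<C>_def)
      next
        case 3 then have "t \<in> \<Union>CL" using CL(4) t IL_def by auto
        then show ?thesis by (auto simp: \<C>_def)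
      qed
    qed
  qed
qed


lemma vd_lip:
  fixes F :: "real \<Rightarrow> 'a::real_normed_vector"
  assumes S: "convex S" and d: "\<And>x. x \<in> S \<Longrightarrow> (F has_vector_derivative F' x) (at x)"
    and b: "\<And>x. x \<in> S \<Longrightarrow> norm (F' x) \<le> L" and s: "s \<in> S" and t: "t \<in> S"
  shows "norm (F t - F s) \<le> L * \<bar>t - s\<bar>"
proof -
  have "norm (F t - F s) \<le> L * norm (t - s)"
  proof (rule differentiable_bound[OF S _ _ t s])
    show "(F has_derivative (\<lambda>h. h *\<^sub>R F' x)) (at x within S)" if "x \<in> S" for x
      using d[OF that] by (simp add: has_vector_derivative_def has_derivative_at_withinI)
    show "onorm (\<lambda>h. h *\<^sub>R F' x) \<le> L" if "x \<in> S" for x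
      using b[OF that] onorm_scaleR_left[OF bounded_linear_ident, of "F' x"] by (simp add: onorm_id)
  qed
  then show ?thesis by simp
qed

lemma piece_cover:
  fixes \<Delta> :: "real \<Rightarrow> 'a::real_inner"
  assumes ab: "{a..b} \<subseteq> T0" and k: "1 \<le> k"
    and D: "\<And>p t. p \<le> k \<Longrightarrow> t \<in> T0 \<Longrightarrow> (vderiv_n p \<Delta> has_vector_derivative vderiv_n (Suc p) \<Delta> t) (at t)"
    and B: "\<And>p t. 1 \<le> p \<Longrightarrow> p \<le> Suc k \<Longrightarrow> t \<in> T0 \<Longrightarrow> norm (vderiv_n p \<Delta> t) \<le> L"
    and c: "c > 0" and tr: "\<exists>p\<le>k. norm (vderiv_n p \<Delta> t0) > c"
    and \<delta>: "0 < \<delta>" "\<delta> \<le> c / 2"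
    and I: "is_interval I" "I \<subseteq> {a..b}" "t0 \<in> {a..b}" "\<And>t. t \<in> I \<Longrightarrow> L * \<bar>t - t0\<bar> \<le> c / 4"
  shows "\<exists>\<C>. finite \<C> \<and> card \<C> \<le> 3 ^ k \<and>
     (\<forall>A\<in>\<C>. bounded A \<and> diameter A \<le> 2 * (2 * \<delta> / c) powr (1 / real k)) \<and>
     {t\<in>I. norm (\<Delta> t) \<le> \<delta>} \<subseteq> \<Union>\<C>"
proof -
  obtain p where p: "p \<le> k" "norm (vderiv_n p \<Delta> t0) > c" using tr by blast
  have lip: "norm (vderiv_n p \<Delta> t - vderiv_n p \<Delta> t0) \<le> c / 4" if t: "t \<in> I" for t
  proof -
    have "norm (vderiv_n p \<Delta> t - vderiv_n p \<Delta> t0) \<le> L * \<bar>t - t0\<bar>"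
    proof (rule vd_lip[of "{a..b}"])
      show "convex {a..b}" by simp
      show "(vderiv_n p \<Delta> has_vector_derivative vderiv_n (Suc p) \<Delta> x) (at x)" if "x \<in> {a..b}" for x
        using D[OF p(1)] ab that by auto
      show "norm (vderiv_n (Suc p) \<Delta> x) \<le> L" if "x \<in> {a..b}" for x
        using B[of "Suc p" x] p ab that by auto
    qed (use I t in auto)
    then show ?thesis using I(4)[OF t] by simp
  qed
  show ?thesis
  proof (cases p)
    case 0
    have "{t\<in>I. norm (\<Delta> t) \<le> \<delta>} = {}"
    proof (safe)
      fix t assume t: "t \<in> I" and n: "norm (\<Delta> t) \<le> \<delta>"
      have "norm (\<Delta> t0) \<le> norm (\<Delta> t) + norm (\<Delta> t - \<Delta> t0)"
        using norm_triangle_sub[of "\<Delta> t0" "\<Delta> t"] norm_minus_commute[of "\<Delta> t0" "\<Delta> t"] by linarith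
      then show "t \<in> {}" using lip[OF t] 0 p(2) n \<delta> by simp
    qed
    then show ?thesis by (intro exI[of _ "{}"]) auto
  next
    case (Suc m)
    define v where "v = vderiv_n p \<Delta> t0"
    define u where "u = v /\<^sub>R norm v"
    have v0: "norm v > c" using p v_def by simp
    have nv: "norm v \<noteq> 0" using v0 c by linarith
    have nu: "norm u = 1" using nv by (simp add: u_def)
    have "v \<bullet> v = norm v * norm v" by (simp add: power2_norm_eq_inner[symmetric] power2_eq_square)
    then have uv: "u \<bullet> v = norm v" using nv by (simp add: u_def)
    define G where "G q t = u \<bullet> vderiv_n q \<Delta> t" for q t
    have Gd: "(G q has_real_derivative G (Suc q) t) (at t)" if "q < Suc m" "t \<in> I" for q t
    proof -
      have "(vderiv_n q \<Delta> has_vector_derivative vderiv_n (Suc q) \<Delta> t) (at t)"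
        using D[of q t] that Suc p I ab by auto
      from bounded_linear.has_vector_derivative[OF bounded_linear_inner_right this, of u]
      show ?thesis unfolding G_def[abs_def] by (simp add: has_real_derivative_iff_has_vector_derivative)
    qed
    have Gp: "G (Suc m) t \<ge> c / 2" if t: "t \<in> I" for t
    proof -
      have "G (Suc m) t = u \<bullet> v + u \<bullet> (vderiv_n p \<Delta> t - vderiv_n p \<Delta> t0)"
        by (simp add: G_def Suc[symmetric] v_def inner_diff_right)
      moreover have "\<bar>u \<bullet> (vderiv_n p \<Delta> t - vderiv_n p \<Delta> t0)\<bar> \<le> c / 4"
        using Cauchy_Schwarz_ineq2[of u "vderiv_n p \<Delta> t - vderiv_n p \<Delta> t0"] nu lip[OF t] by simp
      ultimately show ?thesis using uv v0 by linarith
    qed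
    obtain \<C> where C: "finite \<C>" "card \<C> \<le> 3 ^ Suc m"
      "\<forall>A\<in>\<C>. bounded A \<and> diameter A \<le> 2 * (\<delta> / (c / 2)) powr (1 / real (Suc m))"
      "{t\<in>I. \<bar>G 0 t\<bar> \<le> \<delta>} \<subseteq> \<Union>\<C>"
      using sublevel[OF I(1) _ \<delta>(1) Gd Gp] c by auto
    show ?thesis
    proof (intro exI[of _ \<C>] conjI)
      show "finite \<C>" by (rule C(1))
      have "(3::nat) ^ Suc m \<le> 3 ^ k" using p(1) Suc by (intro power_increasing) auto
      then show "card \<C> \<le> 3 ^ k" using C(2) by linarith
      have le: "2 * (\<delta> / (c / 2)) powr (1 / real (Suc m)) \<le> 2 * (2 * \<delta> / c) powr (1 / real k)"
      proof -
        have "(2 * \<delta> / c) powr (1 / real (Suc m)) \<le> (2 * \<delta> / c) powr (1 / real k)"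
        proof (rule powr_mono')
          have "real (Suc m) \<le> real k" using p(1) Suc by simp
          then show "1 / real k \<le> 1 / real (Suc m)" by (intro divide_left_mono) auto
          show "0 \<le> 2 * \<delta> / c" using \<delta> c by simp
          show "2 * \<delta> / c \<le> 1" using \<delta> c by (simp add: divide_le_eq)
        qed
        then show ?thesis by (simp add: field_simps)
      qed
      show "\<forall>A\<in>\<C>. bounded A \<and> diameter A \<le> 2 * (2 * \<delta> / c) powr (1 / real k)"
        using C(3) le by fastforce
      show "{t\<in>I. norm (\<Delta> t) \<le> \<delta>} \<subseteq> \<Union>\<C>"
      proof
        fix t assume t: "t \<in> {t\<in>I. norm (\<Delta> t) \<le> \<delta>}"
        have "\<bar>G 0 t\<bar> \<le> norm (\<Delta> t)"
          using Cauchy_Schwarz_ineq2[of u "\<Delta> t"] nu by (simp add: G_def)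
        then show "t \<in> \<Union>\<C>" using C(4) t by auto
      qed
    qed
  qed
qed


lemma pair_cover:
  fixes \<Delta> :: "real \<Rightarrow> 'a::real_inner"
  assumes ab: "a \<le> b" "{a..b} \<subseteq> T0" and k: "1 \<le> k"
    and D: "\<And>p t. p \<le> k \<Longrightarrow> t \<in> T0 \<Longrightarrow> (vderiv_n p \<Delta> has_vector_derivative vderiv_n (Suc p) \<Delta> t) (at t)"
    and B: "\<And>p t. 1 \<le> p \<Longrightarrow> p \<le> Suc k \<Longrightarrow> t \<in> T0 \<Longrightarrow> norm (vderiv_n p \<Delta> t) \<le> L"
    and L: "L > 0"
    and c: "c > 0" and tr: "\<And>t. t \<in> {a..b} \<Longrightarrow> \<exists>p\<le>k. norm (vderiv_n p \<Delta> t) > c"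
    and \<delta>: "0 < \<delta>" "\<delta> \<le> c / 2"
  shows "\<exists>\<C>. finite \<C> \<and> real (card \<C>) \<le> ((b - a) * 4 * L / c + 1) * 3 ^ k \<and>
     (\<forall>A\<in>\<C>. bounded A \<and> diameter A \<le> 2 * (2 * \<delta> / c) powr (1 / real k)) \<and>
     {t\<in>{a..b}. norm (\<Delta> t) \<le> \<delta>} \<subseteq> \<Union>\<C>"
proof -
  define r where "r = c / (4 * L)"
  have r0: "r > 0" using c L by (simp add: r_def)
  define N where "N = nat \<lfloor>(b - a) / r\<rfloor> + 1"
  define I where "I j = {a + real j * r .. min b (a + real (Suc j) * r)}" for j :: nat
  have tj: "a + real j * r \<in> {a..b}" if "j < N" for j
  proof -
    have f0: "0 \<le> \<lfloor>(b - a) / r\<rfloor>" using ab r0 by simp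
    have "j \<le> nat \<lfloor>(b - a) / r\<rfloor>" using that by (simp add: N_def)
    then have "int j \<le> \<lfloor>(b - a) / r\<rfloor>" using f0 le_nat_iff by blast
    then have "real j \<le> (b - a) / r" by (metis le_floor_iff of_int_of_nat_eq)
    then have "real j * r \<le> b - a" using r0 by (simp add: field_simps)
    then show ?thesis using r0 by simp
  qed
  have piece: "\<exists>\<C>. finite \<C> \<and> card \<C> \<le> 3 ^ k \<and>
     (\<forall>A\<in>\<C>. bounded A \<and> diameter A \<le> 2 * (2 * \<delta> / c) powr (1 / real k)) \<and>
     {t\<in>I j. norm (\<Delta> t) \<le> \<delta>} \<subseteq> \<Union>\<C>" if j: "j < N" for j
  proof (rule piece_cover[OF ab(2) k D B c tr[OF tj[OF j]] \<delta>])
    show "is_interval (I j)" by (simp add: I_def is_interval_cc)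
    show "I j \<subseteq> {a..b}" using r0 by (auto simp: I_def)
    show "a + real j * r \<in> {a..b}" by (rule tj[OF j])
    show "L * \<bar>t - (a + real j * r)\<bar> \<le> c / 4" if "t \<in> I j" for t
    proof -
      have "\<bar>t - (a + real j * r)\<bar> \<le> r" using that by (auto simp: I_def algebra_simps)
      then have "L * \<bar>t - (a + real j * r)\<bar> \<le> L * r" using L by (intro mult_left_mono) auto
      also have "L * r = c / 4" using L by (simp add: r_def)
      finally show ?thesis .
    qed
  qed
  then have "\<forall>j\<in>{..<N}. \<exists>\<C>. finite \<C> \<and> card \<C> \<le> 3 ^ k \<and>
     (\<forall>A\<in>\<C>. bounded A \<and> diameter A \<le> 2 * (2 * \<delta> / c) powr (1 / real k)) \<and>
     {t\<in>I j. norm (\<Delta> t) \<le> \<delta>} \<subseteq> \<Union>\<C>" by blast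
  then obtain CC where CC0: "\<forall>j\<in>{..<N}. finite (CC j) \<and> card (CC j) \<le> 3 ^ k \<and>
     (\<forall>A\<in>CC j. bounded A \<and> diameter A \<le> 2 * (2 * \<delta> / c) powr (1 / real k)) \<and>
     {t\<in>I j. norm (\<Delta> t) \<le> \<delta>} \<subseteq> \<Union>(CC j)"
    by (rule bchoice[elim_format]) blast
  have CC: "finite (CC j) \<and> card (CC j) \<le> 3 ^ k \<and>
     (\<forall>A\<in>CC j. bounded A \<and> diameter A \<le> 2 * (2 * \<delta> / c) powr (1 / real k)) \<and>
     {t\<in>I j. norm (\<Delta> t) \<le> \<delta>} \<subseteq> \<Union>(CC j)" if "j < N" for j
    using CC0 that by blast
  define \<C> where "\<C> = (\<Union>j<N. CC j)"
  show ?thesis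
  proof (intro exI[of _ \<C>] conjI)
    show "finite \<C>" using CC by (simp add: \<C>_def)
    have "card \<C> \<le> (\<Sum>j<N. card (CC j))" unfolding \<C>_def by (rule card_UN_le) simp
    also have "\<dots> \<le> (\<Sum>j<N. 3 ^ k)" using CC by (intro sum_mono) auto
    also have "\<dots> = N * 3 ^ k" by simp
    finally have "real (card \<C>) \<le> real (N * 3 ^ k)" by (rule of_nat_mono)
    then have "real (card \<C>) \<le> real N * 3 ^ k" by simp
    also have "real N \<le> (b - a) * 4 * L / c + 1"
    proof -
      have "real N = real_of_int \<lfloor>(b - a) / r\<rfloor> + 1" using ab r0 by (simp add: N_def)
      also have "\<dots> \<le> (b - a) / r + 1" by simp
      also have "(b - a) / r = (b - a) * 4 * L / c" using c L by (simp add: r_def field_simps)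
      finally show ?thesis .
    qed
    then have "real N * 3 ^ k \<le> ((b - a) * 4 * L / c + 1) * 3 ^ k" by (intro mult_right_mono) auto
    finally show "real (card \<C>) \<le> ((b - a) * 4 * L / c + 1) * 3 ^ k" .
    show "\<forall>A\<in>\<C>. bounded A \<and> diameter A \<le> 2 * (2 * \<delta> / c) powr (1 / real k)"
      using CC by (auto simp: \<C>_def)
    show "{t\<in>{a..b}. norm (\<Delta> t) \<le> \<delta>} \<subseteq> \<Union>\<C>"
    proof
      fix t assume t: "t \<in> {t\<in>{a..b}. norm (\<Delta> t) \<le> \<delta>}"
      define j where "j = nat \<lfloor>(t - a) / r\<rfloor>"
      have ta: "0 \<le> (t - a) / r" using t r0 by simp
      have jl: "real j \<le> (t - a) / r" using ta by (simp add: j_def)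
      have ju: "(t - a) / r < real j + 1" using ta by (simp add: j_def)
      have "j < N"
      proof -
        have "\<lfloor>(t - a) / r\<rfloor> \<le> \<lfloor>(b - a) / r\<rfloor>" using t r0 by (intro floor_mono divide_right_mono) auto
        then show ?thesis using ta by (simp add: j_def N_def)
      qed
      moreover have "t \<in> I j"
      proof -
        have "real j * r \<le> t - a" using jl r0 by (simp add: field_simps)
        moreover have "t - a \<le> real (Suc j) * r" using ju r0 by (simp add: field_simps)
        ultimately show ?thesis using t by (simp add: I_def)
      qed
      ultimately obtain A where "j < N" "A \<in> CC j" "t \<in> A" using CC t by blast
      then show "t \<in> \<Union>\<C>" by (auto simp: \<C>_def)
    qed
  qed
qed

lemma hdim_zero:
  fixes E :: "'a::metric_space set"
  assumes H: "\<And>s. s > 0 \<Longrightarrow> hausdorff_outer s E = 0"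
  shows "hausdorff_dim E = 0"
proof -
  have ge: "0 \<le> hausdorff_dim E"
    unfolding hausdorff_dim_def by (rule INF_greatest) auto
  have le: "hausdorff_dim E \<le> ereal s" if "s > 0" for s
    unfolding hausdorff_dim_def by (rule INF_lower) (use that H in auto)
  have "hausdorff_dim E \<le> 0"
  proof (rule ccontr)
    assume "\<not> hausdorff_dim E \<le> 0"
    then have pos: "0 < hausdorff_dim E" by simp
    obtain s where s: "0 < ereal s" "ereal s < hausdorff_dim E"
      using ereal_dense2[OF pos] by (metis ereal_dense2 ereal_less(2) less_ereal.simps(1) pos ereal_cases le ereal_less_eq(3) less_le_not_le)
    then show False using le[of s] by simp
  qed
  then show ?thesis using ge by simp
qed


lemma hpre_bound:
  fixes E :: "'a::metric_space set" and s :: real and N :: nat and C :: "nat \<Rightarrow> 'a set set"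
  assumes s: "s > 0" and \<delta>: "\<delta> > 0"
    and fin: "\<And>n. finite (C n)"
    and cardQ: "\<And>n. N < n \<Longrightarrow> real (card (C n)) \<le> Q n"
    and diam: "\<And>n U. N < n \<Longrightarrow> U \<in> C n \<Longrightarrow> bounded U \<and> diameter U \<le> lv n"
    and lv\<delta>: "\<And>n. N < n \<Longrightarrow> lv n \<le> \<delta>"
    and sumb: "\<And>M. (\<Sum>n\<in>{N<..M}. Q n * lv n powr s) \<le> \<eta>"
    and cov: "E \<subseteq> (\<Union>n\<in>{N<..}. \<Union>(C n))"
  shows "hausdorff_pre s \<delta> E \<le> ennreal \<eta>"
proof -
  define lst where "lst n = (SOME xs. set xs = C n \<and> distinct xs)" for n
  have lst: "set (lst n) = C n" "distinct (lst n)" for n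
  proof -
    have "\<exists>xs. set xs = C n \<and> distinct xs" using finite_distinct_list[OF fin[of n]] by blast
    from someI_ex[OF this] show "set (lst n) = C n" "distinct (lst n)" unfolding lst_def by auto
  qed
  have len: "length (lst n) = card (C n)" for n using distinct_card[OF lst(2)] lst(1) by simp
  define y where "y p = (if N < fst p \<and> snd p < length (lst (fst p)) then lst (fst p) ! snd p else {})" for p
  define U where "U m = y (prod_decode m)" for m
  have Ub: "bounded (U m) \<and> diameter (U m) \<le> \<delta>" for m
  proof (cases "N < fst (prod_decode m) \<and> snd (prod_decode m) < length (lst (fst (prod_decode m)))")
    case True
    then have "U m \<in> C (fst (prod_decode m))" using lst(1)[of "fst (prod_decode m)"] nth_mem by (auto simp: U_def y_def)
    then show ?thesis using diam[of "fst (prod_decode m)" "U m"] lv\<delta>[of "fst (prod_decode m)"] True by auto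
  next
    case False
    then have "U m = {}" unfolding U_def y_def by (rule if_not_P)
    then show ?thesis using \<delta> by simp
  qed
  have Ucov: "E \<subseteq> (\<Union>m. U m)"
  proof
    fix x assume "x \<in> E"
    then obtain n A where n: "N < n" "A \<in> C n" "x \<in> A" using cov by blast
    then obtain j where j: "j < length (lst n)" "lst n ! j = A" using lst(1) by (metis in_set_conv_nth)
    have "U (prod_encode (n, j)) = A" using n j by (simp add: U_def y_def)
    then show "x \<in> (\<Union>m. U m)" using n by blast
  qed
  define z where "z p = diameter (y p) powr s" for p
  have z0: "0 \<le> z p" for p by (simp add: z_def)
  have partial: "(\<Sum>m<M. z (prod_decode m)) \<le> \<eta>" for M
  proof -
    have "(\<Sum>m<M. z (prod_decode m)) = (\<Sum>p\<in>prod_decode ` {..<M}. z p)"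
      by (simp add: sum.reindex inj_prod_decode)
    also have "\<dots> \<le> (\<Sum>p\<in>{..M} \<times> {..M}. z p)"
    proof (rule sum_mono2)
      show "prod_decode ` {..<M} \<subseteq> {..M} \<times> {..M}"
      proof
        fix p assume "p \<in> prod_decode ` {..<M}"
        then obtain m where m: "m < M" "p = prod_decode m" by auto
        obtain n j where p: "p = (n, j)" by (cases p)
        have "prod_encode (n, j) = m" using m p by (metis prod_decode_inverse)
        then have "n \<le> m" "j \<le> m" using le_prod_encode_1[of n j] le_prod_encode_2[of j n] by auto
        then show "p \<in> {..M} \<times> {..M}" using m(1) p by auto
      qed
    qed (auto simp: z0)
    also have "\<dots> = (\<Sum>n\<le>M. \<Sum>j\<le>M. z (n, j))" by (rule sum.cartesian_product')
    also have "\<dots> \<le> (\<Sum>n\<le>M. if N < n then Q n * lv n powr s else 0)"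
    proof (rule sum_mono)
      fix n assume "n \<in> {..M}"
      show "(\<Sum>j\<le>M. z (n, j)) \<le> (if N < n then Q n * lv n powr s else 0)"
      proof (cases "N < n")
        case False
        then show ?thesis using s by (simp add: z_def y_def)
      next
        case True
        have "(\<Sum>j\<le>M. z (n, j)) \<le> (\<Sum>j\<le>M. if j < length (lst n) then lv n powr s else 0)"
        proof (rule sum_mono)
          fix j assume "j \<in> {..M}"
          show "z (n, j) \<le> (if j < length (lst n) then lv n powr s else 0)"
          proof (cases "j < length (lst n)")
            case True
            then have "lst n ! j \<in> C n" using lst(1)[of n] nth_mem by blast
            then have "diameter (lst n ! j) \<le> lv n" using diam \<open>N < n\<close> by blast
            moreover have "0 \<le> diameter (lst n ! j)" by (rule diameter_ge_0) (use \<open>lst n ! j \<in> C n\<close> diam \<open>N < n\<close> in blast)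
            ultimately have "diameter (lst n ! j) powr s \<le> lv n powr s" using s by (intro powr_mono2) auto
            then show ?thesis using True \<open>N < n\<close> by (simp add: z_def y_def)
          next
            case False
            then show ?thesis using s by (simp add: z_def y_def)
          qed
        qed
        also have "\<dots> = (\<Sum>j\<in>{..M} \<inter> {..<length (lst n)}. lv n powr s)"
          by (simp add: sum.If_cases Int_def)
        also have "\<dots> = real (card ({..M} \<inter> {..<length (lst n)})) * lv n powr s" by simp
        also have "\<dots> \<le> real (card (C n)) * lv n powr s"
        proof (rule mult_right_mono)
          have "card ({..M} \<inter> {..<length (lst n)}) \<le> card {..<length (lst n)}" by (rule card_mono) auto
          then show "real (card ({..M} \<inter> {..<length (lst n)})) \<le> real (card (C n))" using len by simp
        qed simp
        also have "\<dots> \<le> Q n * lv n powr s" using cardQ[OF True] by (intro mult_right_mono) auto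
        finally show ?thesis using True by simp
      qed
    qed
    also have "\<dots> = (\<Sum>n\<in>{..M} \<inter> {n. N < n}. Q n * lv n powr s)"
      by (simp add: sum.If_cases)
    also have "{..M} \<inter> {n. N < n} = {N<..M}" by auto
    also have "(\<Sum>n\<in>{N<..M}. Q n * lv n powr s) \<le> \<eta>" by (rule sumb)
    finally show ?thesis .
  qed
  have "(\<Sum>m. ennreal (diameter (U m) powr s)) \<le> ennreal \<eta>"
  proof (rule suminf_le_const)
    show "summable (\<lambda>m. ennreal (diameter (U m) powr s))" by (rule summableI)
    fix M
    have "(\<Sum>m<M. ennreal (diameter (U m) powr s)) = ennreal (\<Sum>m<M. z (prod_decode m))"
      by (subst sum_ennreal) (auto simp: U_def z_def)
    also have "\<dots> \<le> ennreal \<eta>" using partial by (rule ennreal_leI)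
    finally show "(\<Sum>m<M. ennreal (diameter (U m) powr s)) \<le> ennreal \<eta>" .
  qed
  moreover have "hausdorff_pre s \<delta> E \<le> (\<Sum>m. ennreal (diameter (U m) powr s))"
    unfolding hausdorff_pre_def by (rule INF_lower) (use Ucov Ub in auto)
  ultimately show ?thesis by simp
qed

lemma geom_tail: "(\<Sum>n\<in>{N<..M}. (1/2::real) ^ n) \<le> (1/2) ^ N"
proof (induction M)
  case 0 then show ?case by simp
next
  case (Suc M)
  show ?case
  proof (cases "N < Suc M")
    case False
    then have "{N<..Suc M} = {}" by auto
    then show ?thesis by simp
  next
    case True
    then have eq: "{N<..Suc M} = insert (Suc M) {N<..M}" by auto
    have "(\<Sum>n\<in>{N<..M}. (1/2::real) ^ n) = (1/2)^N - (1/2)^M"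
    proof (cases "N \<le> M")
      case True
      then show ?thesis
      proof (induction M rule: dec_induct)
        case base then show ?case by simp
      next
        case (step m)
        have "{N<..Suc m} = insert (Suc m) {N<..m}" using step by auto
        then show ?case using step by simp
      qed
    next
      case False
      then have "M = N" using True by simp
      then show ?thesis by simp
    qed
    then show ?thesis unfolding eq by simp
  qed
qed

lemma powr_pow_swap: "0 \<le> x \<Longrightarrow> (x ^ n) powr a = (x powr a) ^ n" for x :: real
proof (cases "x = 0")
  case True
  then show ?thesis by (cases n) auto
next
  case False
  assume "0 \<le> x"
  then have x: "0 < x" using False by simp
  have "(x ^ n) powr a = (x powr real n) powr a" using x by (simp add: powr_realpow)
  also have "\<dots> = (x powr a) powr real n" by (simp add: powr_powr mult.commute)
  also have "\<dots> = (x powr a) ^ n" using x by (simp add: powr_realpow)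
  finally show ?thesis .
qed

lemma pow_powr_inv: "0 \<le> x \<Longrightarrow> k \<noteq> 0 \<Longrightarrow> (x ^ k) powr (1 / real k) = x" for x :: real
proof -
  assume x: "0 \<le> x" and k: "k \<noteq> 0"
  have "(x ^ k) powr (1 / real k) = (x powr (1 / real k)) ^ k" by (rule powr_pow_swap[OF x])
  also have "\<dots> = (x powr (1 / real k)) powr real k" using x k by (simp add: powr_realpow')
  also have "\<dots> = x" using x k by (simp add: powr_powr)
  finally show ?thesis .
qed


lemma analytic_setup:
  fixes f :: "'i \<Rightarrow> real^'d \<Rightarrow> real \<Rightarrow> real^'d"
    and Lam :: "'i set" and V :: "(real^'d) set" and a b :: real and x0 :: "real^'d" and k :: nat
  assumes J: "a \<le> b"
    and V: "open V" "bounded V"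
    and x0: "x0 \<in> V"
    and Lam: "finite Lam"
    and maps: "\<And>i x t. i \<in> Lam \<Longrightarrow> x \<in> closure V \<Longrightarrow> t \<in> {a..b} \<Longrightarrow> f i x t \<in> V"
    and analytic: "\<And>i. i \<in> Lam \<Longrightarrow> \<exists>U. open U \<and> closure V \<times> {a..b} \<subseteq> U \<and> real_analytic_xt_on (f i) U"
  shows "\<exists>\<eta> R. \<eta> > 0 \<and> R \<ge> 1 \<and> (\<forall>w\<in>lists Lam.
     (\<forall>q t. q \<le> k \<longrightarrow> t \<in> {a-\<eta><..<b+\<eta>} \<longrightarrow> (vderiv_n q (\<lambda>t. comp_word f w t x0) has_vector_derivative
         vderiv_n (Suc q) (\<lambda>t. comp_word f w t x0) t) (at t)) \<and>
     (\<forall>q t. 1 \<le> q \<longrightarrow> q \<le> Suc k \<longrightarrow> t \<in> {a-\<eta><..<b+\<eta>} \<longrightarrow>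
         norm (vderiv_n q (\<lambda>t. comp_word f w t x0) t) \<le> (R ^ length w) ^ q))"
proof -
  have "\<forall>i\<in>Lam. \<exists>U. open U \<and> closure V \<times> {a..b} \<subseteq> U \<and> real_analytic_xt_on (f i) U"
    using analytic by blast
  then obtain Uf where Uf: "\<forall>i\<in>Lam. open (Uf i) \<and> closure V \<times> {a..b} \<subseteq> Uf i \<and> real_analytic_xt_on (f i) (Uf i)"
    by (rule bchoice[elim_format]) blast
  define \<Phi> where "\<Phi> i = (\<lambda>y. f i (fst y) (snd y))" for i
  have hyp: "(PP ws (\<Phi> i) has_derivative (\<lambda>h. \<Sum>v\<in>UNIV. cd v h *\<^sub>R PP (v # ws) (\<Phi> i) p)) (at p)"
    if "i \<in> Lam" "p \<in> Uf i" for i ws p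
    unfolding \<Phi>_def by (rule analytic_PP_deriv) (use Uf that in auto)
  have cont: "continuous_on (Uf i) (PP ws (\<Phi> i))" if "i \<in> Lam" for i ws
    by (rule continuous_at_imp_continuous_on) (use has_derivative_continuous hyp that in blast)
  define G where "G = (\<Inter>i\<in>Lam. Uf i \<inter> \<Phi> i -` V)"
  have Gopen: "open G" unfolding G_def
  proof (rule open_INT[OF Lam], intro ballI)
    fix i assume i: "i \<in> Lam"
    have "continuous_on (Uf i) (\<Phi> i)" using cont[OF i, of "[]"] by simp
    then show "open (Uf i \<inter> \<Phi> i -` V)" using continuous_open_preimage Uf i V(1) by blast
  qed
  define Kc where "Kc = closure V \<times> {a..b}"
  have Kcc: "compact Kc" unfolding Kc_def using V(2) by (simp add: compact_Times compact_closure)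
  have KcG: "Kc \<subseteq> G"
  proof
    fix p assume "p \<in> Kc"
    then obtain x t where p: "p = (x, t)" "x \<in> closure V" "t \<in> {a..b}" by (auto simp: Kc_def)
    have "(x, t) \<in> Uf i \<inter> \<Phi> i -` V" if i: "i \<in> Lam" for i
    proof
      show "(x, t) \<in> Uf i" using Uf i p by blast
      show "(x, t) \<in> \<Phi> i -` V" using maps[OF i p(2) p(3)] by (simp add: \<Phi>_def)
    qed
    then show "p \<in> G" unfolding G_def p(1) by blast
  qed
  have "(x0, a) \<in> Kc" unfolding Kc_def using x0 J closure_subset[of V] by auto
  then have Kcne: "Kc \<noteq> {}" by blast
  obtain \<eta> where \<eta>: "\<eta> > 0" "{x. infdist x Kc \<le> \<eta>} \<subseteq> G"
    using compact_in_open_separated[OF Kcne Kcc Gopen KcG] by blast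
  define T0 where "T0 = {a-\<eta><..<b+\<eta>}"
  define K2 where "K2 = closure V \<times> {a-\<eta>..b+\<eta>}"
  have K2G: "K2 \<subseteq> G"
  proof
    fix p assume "p \<in> K2"
    then obtain x t where p: "p = (x, t)" "x \<in> closure V" "t \<in> {a-\<eta>..b+\<eta>}" by (auto simp: K2_def)
    define t' where "t' = max a (min b t)"
    have "(x, t') \<in> Kc" using J p by (auto simp: Kc_def t'_def)
    then have "infdist (x, t) Kc \<le> dist (x, t) (x, t')" by (rule infdist_le)
    also have "\<dots> = \<bar>t - t'\<bar>" by (simp add: dist_Pair_Pair dist_real_def)
    also have "\<dots> \<le> \<eta>" using p J \<eta> by (auto simp: t'_def)
    finally show "p \<in> G" using \<eta>(2) p by auto
  qed
  have K2c: "compact K2" unfolding K2_def using V(2) by (simp add: compact_Times compact_closure)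
  have K2U: "K2 \<subseteq> Uf i" if "i \<in> Lam" for i using K2G that by (auto simp: G_def)
  define FS where "FS = Lam \<times> {ws :: 'd option list. set ws \<subseteq> UNIV \<and> length ws \<le> Suc k}"
  have FSfin: "finite FS" unfolding FS_def using Lam by (intro finite_cartesian_product finite_lists_length_le) auto
  have "\<forall>q\<in>FS. \<exists>B. \<forall>y\<in>K2. norm (PP (snd q) (\<Phi> (fst q)) y) \<le> B"
  proof
    fix q assume q: "q \<in> FS"
    have "compact (PP (snd q) (\<Phi> (fst q)) ` K2)"
      by (rule compact_continuous_image[OF continuous_on_subset[OF cont K2U] K2c]) (use q FS_def in auto)
    then have "bounded (PP (snd q) (\<Phi> (fst q)) ` K2)" by (rule compact_imp_bounded)
    then obtain B where B: "\<forall>z\<in>PP (snd q) (\<Phi> (fst q)) ` K2. norm z \<le> B" unfolding bounded_iff by blast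
    show "\<exists>B. \<forall>y\<in>K2. norm (PP (snd q) (\<Phi> (fst q)) y) \<le> B"
      by (rule exI[of _ B]) (use B in blast)
  qed
  then obtain Bf where Bf: "\<forall>q\<in>FS. \<forall>y\<in>K2. norm (PP (snd q) (\<Phi> (fst q)) y) \<le> Bf q"
    by (rule bchoice[elim_format]) blast
  define Mb where "Mb = (\<Sum>q\<in>FS. \<bar>Bf q\<bar>)"
  have Mb0: "0 \<le> Mb" by (simp add: Mb_def sum_nonneg)
  have Mb: "norm (PP ws (\<Phi> i) (x, t)) \<le> Mb"
    if "i \<in> Lam" "length ws \<le> Suc k" "x \<in> closure V" "t \<in> T0" for i ws x t
  proof -
    have q: "(i, ws) \<in> FS" using that by (simp add: FS_def)
    have "(x, t) \<in> K2" using that by (auto simp: K2_def T0_def)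
    then have "norm (PP ws (\<Phi> i) (x, t)) \<le> Bf (i, ws)" using Bf q by (metis fst_conv snd_conv)
    also have "\<dots> \<le> \<bar>Bf (i, ws)\<bar>" by simp
    also have "\<dots> \<le> Mb" unfolding Mb_def by (rule member_le_sum[OF q _ FSfin]) simp
    finally show ?thesis .
  qed
  define Dc where "Dc = real CARD('d option)"
  define R where "R = 2 * (Dc + real (Suc k)) * (Mb + 1)"
  have Dc0: "Dc \<ge> 0" by (simp add: Dc_def)
  have R1: "R \<ge> 1"
  proof -
    have "1 \<le> 2 * (Dc + real (Suc k))" using Dc0 by simp
    moreover have "1 \<le> Mb + 1" using Mb0 by simp
    ultimately have "1 * 1 \<le> 2 * (Dc + real (Suc k)) * (Mb + 1)" by (intro mult_mono) auto
    then show ?thesis by (simp add: R_def)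
  qed
  have Rcond: "(Dc + real p) ^ p * (2 ^ p * Mb) \<le> R ^ p" if p: "1 \<le> p" "p \<le> Suc k" for p
  proof -
    have "(Dc + real p) ^ p * (2 ^ p * Mb) = (2 * (Dc + real p)) ^ p * Mb"
      by (simp only: power_mult_distrib mult.assoc mult.commute mult.left_commute)
    also have "\<dots> \<le> (2 * (Dc + real (Suc k))) ^ p * (Mb + 1) ^ p"
    proof (rule mult_mono)
      show "(2 * (Dc + real p)) ^ p \<le> (2 * (Dc + real (Suc k))) ^ p" using p Dc0 by (intro power_mono) auto
      have "Mb + 1 \<le> (Mb + 1) ^ p" using p Mb0 by (intro self_le_power) auto
      then show "Mb \<le> (Mb + 1) ^ p" by simp
    qed (use Dc0 Mb0 in auto)
    also have "\<dots> = R ^ p" unfolding R_def by (simp only: power_mult_distrib)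
    finally show ?thesis .
  qed
  have KV: "(x, t) \<in> Uf i \<and> f i x t \<in> closure V" if "i \<in> Lam" "x \<in> closure V" "t \<in> T0" for i x t
  proof -
    have "(x, t) \<in> K2" using that by (auto simp: K2_def T0_def)
    then have "(x, t) \<in> G" using K2G by auto
    then have "(x, t) \<in> Uf i \<inter> \<Phi> i -` V" using that(1) unfolding G_def by blast
    then show ?thesis using closure_subset[of V] by (auto simp: \<Phi>_def)
  qed
  have WS: "(\<forall>t\<in>T0. comp_word f w t x0 \<in> closure V) \<and>
    (\<forall>q t. q \<le> k \<longrightarrow> t \<in> T0 \<longrightarrow> (vderiv_n q (\<lambda>t. comp_word f w t x0) has_vector_derivative
         vderiv_n (Suc q) (\<lambda>t. comp_word f w t x0) t) (at t)) \<and>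
    (\<forall>q t. 1 \<le> q \<longrightarrow> q \<le> Suc k \<longrightarrow> t \<in> T0 \<longrightarrow> norm (vderiv_n q (\<lambda>t. comp_word f w t x0) t) \<le> (R ^ length w) ^ q)"
    if w: "w \<in> lists Lam" for w
  proof (rule word_smooth[where W = Uf and C = "closure V" and Mb = Mb])
    show "(PP ws (\<lambda>y. f i (fst y) (snd y)) has_derivative
        (\<lambda>h. \<Sum>v\<in>UNIV. cd v h *\<^sub>R PP (v # ws) (\<lambda>y. f i (fst y) (snd y)) p)) (at p)"
      if "i \<in> Lam" "p \<in> Uf i" for i ws p using hyp[OF that, of ws] by (simp add: \<Phi>_def)
    show "open T0" by (simp add: T0_def)
    show "(x, t) \<in> Uf i \<and> f i x t \<in> closure V" if "i \<in> Lam" "x \<in> closure V" "t \<in> T0" for i x t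
      by (rule KV[OF that])
    show "x0 \<in> closure V" using x0 closure_subset by auto
    show "norm (PP ws (\<lambda>y. f i (fst y) (snd y)) (x, t)) \<le> Mb"
      if "i \<in> Lam" "length ws \<le> Suc k" "x \<in> closure V" "t \<in> T0" for i ws x t
      using Mb[OF that] by (simp add: \<Phi>_def)
    show "1 \<le> R" by (rule R1)
    show "(real CARD('d option) + real p) ^ p * (2 ^ p * Mb) \<le> R ^ p" if "1 \<le> p" "p \<le> Suc k" for p
      using Rcond[OF that] by (simp add: Dc_def)
    show "w \<in> lists Lam" by (rule w)
  qed
  show ?thesis
  proof (rule exI[of _ \<eta>], rule exI[of _ R], intro conjI)
    show "\<eta> > 0" by (rule \<eta>(1))
    show "R \<ge> 1" by (rule R1)
    show "\<forall>w\<in>lists Lam.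
     (\<forall>q t. q \<le> k \<longrightarrow> t \<in> {a-\<eta><..<b+\<eta>} \<longrightarrow> (vderiv_n q (\<lambda>t. comp_word f w t x0) has_vector_derivative
         vderiv_n (Suc q) (\<lambda>t. comp_word f w t x0) t) (at t)) \<and>
     (\<forall>q t. 1 \<le> q \<longrightarrow> q \<le> Suc k \<longrightarrow> t \<in> {a-\<eta><..<b+\<eta>} \<longrightarrow>
         norm (vderiv_n q (\<lambda>t. comp_word f w t x0) t) \<le> (R ^ length w) ^ q)"
      using WS unfolding T0_def by blast
  qed
qed


theorem lemma2p13:
  fixes f :: "'i \<Rightarrow> real^'d \<Rightarrow> real \<Rightarrow> real^'d"
    and Lam :: "'i set" and V :: "(real^'d) set" and a b :: real and x0 :: "real^'d"
    and C \<gamma> :: real and k :: nat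
  assumes J: "a \<le> b"
    and V: "open V" "bounded V"
    and x0: "x0 \<in> V"
    and Lam: "finite Lam"
    and maps: "\<And>i x t. i \<in> Lam \<Longrightarrow> x \<in> closure V \<Longrightarrow> t \<in> {a..b} \<Longrightarrow> f i x t \<in> V"
    and analytic: "\<And>i. i \<in> Lam \<Longrightarrow> \<exists>U. open U \<and> closure V \<times> {a..b} \<subseteq> U \<and> real_analytic_xt_on (f i) U"
    and C: "C > 0" and \<gamma>: "0 < \<gamma>" "\<gamma> < 1"
    and contr: "\<And>n is x t D. n \<ge> 1 \<Longrightarrow> is \<in> lists Lam \<Longrightarrow> length is = n \<Longrightarrow> x \<in> closure V
                 \<Longrightarrow> t \<in> {a..b} \<Longrightarrow> (comp_word f is t has_derivative D) (at x)
                 \<Longrightarrow> onorm D \<le> C * \<gamma> ^ n"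
    and k: "k \<ge> 1"
    and transverse: "transverse_of_order f Lam x0 {a..b} k"
  shows "hausdorff_dim (exc_set f Lam x0 {a..b}) = 0"
proof -
  obtain \<eta> R where \<eta>: "\<eta> > 0" and R1: "R \<ge> 1" and WS: "\<forall>w\<in>lists Lam.
     (\<forall>q t. q \<le> k \<longrightarrow> t \<in> {a-\<eta><..<b+\<eta>} \<longrightarrow> (vderiv_n q (\<lambda>t. comp_word f w t x0) has_vector_derivative
         vderiv_n (Suc q) (\<lambda>t. comp_word f w t x0) t) (at t)) \<and>
     (\<forall>q t. 1 \<le> q \<longrightarrow> q \<le> Suc k \<longrightarrow> t \<in> {a-\<eta><..<b+\<eta>} \<longrightarrow>
         norm (vderiv_n q (\<lambda>t. comp_word f w t x0) t) \<le> (R ^ length w) ^ q)"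
    using analytic_setup[where f=f and k=k, OF J V x0 Lam maps analytic] by blast
  obtain c where c: "c > 0" and tr: "\<And>n is js. is \<in> lists Lam \<and> js \<in> lists Lam \<and> length is = n \<and> length js = n
        \<and> hd is \<noteq> hd js \<Longrightarrow> (\<forall>t\<in>{a..b}. \<exists>p\<le>k. norm (vderiv_n p (Delta f x0 is js) t) > c)"
    using transverse unfolding transverse_of_order_def by blast
  define T0 where "T0 = {a-\<eta><..<b+\<eta>}"
  have T0o: "open T0" by (simp add: T0_def)
  have abT0: "{a..b} \<subseteq> T0" using \<eta> by (auto simp: T0_def)
  define P where "P n = {(is, js). is \<in> lists Lam \<and> js \<in> lists Lam \<and> length is = n \<and> length js = n \<and> hd is \<noteq> hd js}" for n
  define \<rho> where "\<rho> = R ^ Suc k"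
  have \<rho>1: "\<rho> \<ge> 1" unfolding \<rho>_def using R1 by (rule one_le_power)
  define A1 where "A1 = ((b - a) * 8 / c + 1) * 3 ^ k"
  have A10: "A1 \<ge> 0" using J c by (simp add: A1_def)
  have paircov: "\<exists>\<C>. finite \<C> \<and> real (card \<C>) \<le> A1 * \<rho> ^ n \<and>
      (\<forall>A\<in>\<C>. bounded A \<and> diameter A \<le> 2 * (2 * \<delta> / c) powr (1 / real k)) \<and>
      {t\<in>{a..b}. norm (Delta f x0 xs ys t) \<le> \<delta>} \<subseteq> \<Union>\<C>"
    if pr: "(xs, ys) \<in> P n" and \<delta>: "0 < \<delta>" "\<delta> \<le> c / 2" for n xs ys \<delta>
  proof -
    have isL: "xs \<in> lists Lam" "length xs = n" and jsL: "ys \<in> lists Lam" "length ys = n"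
      and hd: "hd xs \<noteq> hd ys" using pr by (auto simp: P_def)
    note WF = bspec[OF WS isL(1)]
    note WG = bspec[OF WS jsL(1)]
    define F where "F = (\<lambda>t. comp_word f xs t x0)"
    define G where "G = (\<lambda>t. comp_word f ys t x0)"
    have Fd: "\<And>q t. q \<le> k \<Longrightarrow> t \<in> T0 \<Longrightarrow> (vderiv_n q F has_vector_derivative vderiv_n (Suc q) F t) (at t)"
      using WF isL(2) unfolding F_def T0_def by blast
    have Gd: "\<And>q t. q \<le> k \<Longrightarrow> t \<in> T0 \<Longrightarrow> (vderiv_n q G has_vector_derivative vderiv_n (Suc q) G t) (at t)"
      using WG jsL(2) unfolding G_def T0_def by blast
    have Fb: "\<And>q t. 1 \<le> q \<Longrightarrow> q \<le> Suc k \<Longrightarrow> t \<in> T0 \<Longrightarrow> norm (vderiv_n q F t) \<le> (R ^ n) ^ q"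
      using WF isL(2) unfolding F_def T0_def by blast
    have Gb: "\<And>q t. 1 \<le> q \<Longrightarrow> q \<le> Suc k \<Longrightarrow> t \<in> T0 \<Longrightarrow> norm (vderiv_n q G t) \<le> (R ^ n) ^ q"
      using WG jsL(2) unfolding G_def T0_def by blast
    have Deq: "Delta f x0 xs ys = (\<lambda>t. F t - G t)" by (simp add: Delta_def fun_eq_iff F_def G_def)
    have D: "(vderiv_n p (Delta f x0 xs ys) has_vector_derivative vderiv_n (Suc p) (Delta f x0 xs ys) t) (at t)"
      if "p \<le> k" "t \<in> T0" for p t
      unfolding Deq by (rule vderiv_diff(2)[OF T0o Fd Gd that])
    have B: "norm (vderiv_n p (Delta f x0 xs ys) t) \<le> 2 * \<rho> ^ n"
      if p: "1 \<le> p" "p \<le> Suc k" and t: "t \<in> T0" for p t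
    proof -
      have "vderiv_n p (Delta f x0 xs ys) t = vderiv_n p F t - vderiv_n p G t"
        unfolding Deq by (rule vderiv_diff(1)[OF T0o Fd Gd p(2) t])
      then have "norm (vderiv_n p (Delta f x0 xs ys) t) \<le> norm (vderiv_n p F t) + norm (vderiv_n p G t)"
        by (simp add: norm_triangle_ineq4)
      also have "\<dots> \<le> (R ^ n) ^ p + (R ^ n) ^ p" using Fb[OF p t] Gb[OF p t] by simp
      also have "(R ^ n) ^ p \<le> (R ^ n) ^ Suc k" using p R1 by (intro power_increasing) auto
      also have "(R ^ n) ^ Suc k = \<rho> ^ n" unfolding \<rho>_def by (simp only: power_mult[symmetric] mult.commute)
      finally show ?thesis by simp
    qed
    have L0: "2 * \<rho> ^ n > 0" using \<rho>1 by simp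
    have trt: "\<And>t. t \<in> {a..b} \<Longrightarrow> \<exists>p\<le>k. norm (vderiv_n p (Delta f x0 xs ys) t) > c"
      using tr[of "xs" ys n] isL jsL hd by blast
    obtain \<C> where C1: "finite \<C>" "real (card \<C>) \<le> ((b - a) * 4 * (2 * \<rho> ^ n) / c + 1) * 3 ^ k"
      "\<forall>A\<in>\<C>. bounded A \<and> diameter A \<le> 2 * (2 * \<delta> / c) powr (1 / real k)"
      "{t\<in>{a..b}. norm (Delta f x0 xs ys t) \<le> \<delta>} \<subseteq> \<Union>\<C>"
      using pair_cover[OF J abT0 k D B L0 c trt \<delta>] by blast
    have "((b - a) * 4 * (2 * \<rho> ^ n) / c + 1) * 3 ^ k \<le> A1 * \<rho> ^ n"
    proof -
      have r: "1 \<le> \<rho> ^ n" using \<rho>1 by simp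
      have "(b - a) * 4 * (2 * \<rho> ^ n) / c + 1 \<le> ((b - a) * 8 / c + 1) * \<rho> ^ n"
        using r J c by (simp add: field_simps)
      then show ?thesis unfolding A1_def by (simp add: mult_right_mono mult.commute mult.left_commute)
    qed
    then show ?thesis using C1 by (intro exI[of _ \<C>]) auto
  qed
  define E where "E = exc_set f Lam x0 {a..b}"
  define \<Lambda> where "\<Lambda> = real (card Lam)"
  define B0 where "B0 = max 1 (\<Lambda>^2 * \<rho>)"
  have B01: "B0 \<ge> 1" by (simp add: B0_def)
  define \<kappa> where "\<kappa> = (2 / c) powr (1 / real k)"
  have \<kappa>0: "\<kappa> > 0" using c by (simp add: \<kappa>_def)
  have Pfin: "finite (P n)" for n
  proof -
    have "P n \<subseteq> {xs. set xs \<subseteq> Lam \<and> length xs = n} \<times> {xs. set xs \<subseteq> Lam \<and> length xs = n}"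
      by (auto simp: P_def)
    moreover have "finite ({xs. set xs \<subseteq> Lam \<and> length xs = n} \<times> {xs. set xs \<subseteq> Lam \<and> length xs = n})"
      using Lam by (intro finite_cartesian_product finite_lists_length_eq)
    ultimately show ?thesis by (rule finite_subset)
  qed
  have Pcard: "real (card (P n)) \<le> (\<Lambda>^2) ^ n" for n
  proof -
    have "P n \<subseteq> {xs. set xs \<subseteq> Lam \<and> length xs = n} \<times> {xs. set xs \<subseteq> Lam \<and> length xs = n}"
      by (auto simp: P_def)
    then have "card (P n) \<le> card ({xs. set xs \<subseteq> Lam \<and> length xs = n} \<times> {xs. set xs \<subseteq> Lam \<and> length xs = n})"
      using Lam by (intro card_mono finite_cartesian_product finite_lists_length_eq) auto
    also have "\<dots> = card Lam ^ n * card Lam ^ n"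
      using Lam by (simp add: card_cartesian_product card_lists_length_eq)
    finally have "real (card (P n)) \<le> real (card Lam ^ n * card Lam ^ n)" by (rule of_nat_mono)
    then show ?thesis by (simp add: \<Lambda>_def power_mult_distrib[symmetric] power2_eq_square power_mult[symmetric] mult.commute)
  qed
  have H0: "hausdorff_outer s E = 0" if s: "s > 0" for s
  proof -
    define X where "X = (1 / (2 * B0)) powr (1 / s)"
    have X0: "X > 0" using B01 by (simp add: X_def)
    define \<tau> where "\<tau> = min (1/2) (min (c/2) X)"
    have \<tau>0: "\<tau> > 0" using c X0 by (simp add: \<tau>_def)
    have \<tau>h: "\<tau> \<le> 1/2" "\<tau> \<le> c/2" "\<tau> \<le> X" by (auto simp: \<tau>_def)
    have \<tau>s: "B0 * \<tau> powr s \<le> 1/2"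
    proof -
      have "\<tau> powr s \<le> X powr s" using \<tau>0 \<tau>h s by (intro powr_mono2) auto
      also have "X powr s = 1 / (2 * B0)" using s B01 by (simp add: X_def powr_powr)
      finally show ?thesis using B01 by (simp add: field_simps)
    qed
    define \<epsilon> where "\<epsilon> = \<tau> ^ k"
    have \<epsilon>0: "\<epsilon> > 0" using \<tau>0 by (simp add: \<epsilon>_def)
    have \<epsilon>n: "\<epsilon> ^ n \<le> c / 2" if "1 \<le> n" for n
    proof -
      have "\<epsilon> ^ n = \<tau> ^ (k * n)" by (simp add: \<epsilon>_def power_mult)
      also have "\<dots> \<le> \<tau> ^ 1" using \<tau>0 \<tau>h k that by (intro power_decreasing) auto
      finally show ?thesis using \<tau>h by simp
    qed
    have "\<forall>q\<in>Sigma {1..} P. \<exists>\<C>. finite \<C> \<and> real (card \<C>) \<le> A1 * \<rho> ^ fst q \<and>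
      (\<forall>A\<in>\<C>. bounded A \<and> diameter A \<le> 2 * (2 * \<epsilon> ^ fst q / c) powr (1 / real k)) \<and>
      {t\<in>{a..b}. norm (Delta f x0 (fst (snd q)) (snd (snd q)) t) \<le> \<epsilon> ^ fst q} \<subseteq> \<Union>\<C>"
    proof
      fix q assume q: "q \<in> Sigma {1..} P"
      obtain n xs ys where qq: "q = (n, xs, ys)" by (cases q) auto
      have "(xs, ys) \<in> P n" "1 \<le> n" using q qq by auto
      then show "\<exists>\<C>. finite \<C> \<and> real (card \<C>) \<le> A1 * \<rho> ^ fst q \<and>
        (\<forall>A\<in>\<C>. bounded A \<and> diameter A \<le> 2 * (2 * \<epsilon> ^ fst q / c) powr (1 / real k)) \<and>
        {t\<in>{a..b}. norm (Delta f x0 (fst (snd q)) (snd (snd q)) t) \<le> \<epsilon> ^ fst q} \<subseteq> \<Union>\<C>"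
        using paircov[of xs ys n "\<epsilon> ^ n"] \<epsilon>0 \<epsilon>n qq by simp
    qed
    then obtain CCf where CCf: "\<forall>q\<in>Sigma {1..} P. finite (CCf q) \<and> real (card (CCf q)) \<le> A1 * \<rho> ^ fst q \<and>
      (\<forall>A\<in>CCf q. bounded A \<and> diameter A \<le> 2 * (2 * \<epsilon> ^ fst q / c) powr (1 / real k)) \<and>
      {t\<in>{a..b}. norm (Delta f x0 (fst (snd q)) (snd (snd q)) t) \<le> \<epsilon> ^ fst q} \<subseteq> \<Union>(CCf q)"
      by (rule bchoice[elim_format]) blast
    define CL where "CL n = (\<Union>pr\<in>P n. CCf (n, pr))" for n
    define Q where "Q n = A1 * B0 ^ n" for n
    define lv where "lv n = 2 * \<kappa> * \<tau> ^ n" for n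
    define A3 where "A3 = A1 * (2 * \<kappa>) powr s"
    have A30: "A3 \<ge> 0" using A10 by (simp add: A3_def)
    have preb: "\<forall>\<eta>'>0. hausdorff_pre s \<delta>H E \<le> ennreal \<eta>'" if \<delta>H: "\<delta>H > 0" for \<delta>H
    proof (intro allI impI)
      fix \<eta>' :: real assume \<eta>': "\<eta>' > 0"
      define m where "m = min (\<eta>' / (A3 + 1)) (\<delta>H / (2 * \<kappa> + 1))"
      have m0: "m > 0" using \<eta>' \<delta>H A30 \<kappa>0 by (simp add: m_def)
      obtain N1 where N1: "(1/2::real) ^ N1 < m" using real_arch_pow_inv[OF m0, of "1/2"] by auto
      define N where "N = Suc N1"
      have N1le: "(1/2::real) ^ N \<le> (1/2) ^ N1" unfolding N_def by (intro power_decreasing) auto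
      have hN: "A3 * (1/2) ^ N \<le> \<eta>'" "2 * \<kappa> * (1/2) ^ N \<le> \<delta>H"
      proof -
        have "(1/2::real) ^ N < m" using N1le N1 by linarith
        then have a: "(1/2::real) ^ N \<le> \<eta>' / (A3 + 1)" and b: "(1/2::real) ^ N \<le> \<delta>H / (2 * \<kappa> + 1)"
          by (auto simp: m_def)
        have "A3 * (1/2) ^ N \<le> (A3 + 1) * (1/2) ^ N" by simp
        also have "\<dots> \<le> \<eta>'" using a A30 by (simp add: field_simps)
        finally show "A3 * (1/2) ^ N \<le> \<eta>'" .
        have "2 * \<kappa> * (1/2) ^ N \<le> (2 * \<kappa> + 1) * (1/2) ^ N" by simp
        also have "\<dots> \<le> \<delta>H" using b \<kappa>0 by (simp add: field_simps)
        finally show "2 * \<kappa> * (1/2) ^ N \<le> \<delta>H" .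
      qed
      show "hausdorff_pre s \<delta>H E \<le> ennreal \<eta>'"
      proof (rule hpre_bound[where C = CL and N = N and Q = Q and lv = lv])
        show "s > 0" by (rule s)
        show "\<delta>H > 0" by (rule \<delta>H)
        show "finite (CL n)" for n
          unfolding CL_def
        proof (cases "n \<ge> 1")
          case True
          then show "finite (\<Union>pr\<in>P n. CCf (n, pr))" using Pfin CCf by auto
        next
          case False
          then have "n = 0" by simp
          then have "P n = {}" by (auto simp: P_def)
          then show "finite (\<Union>pr\<in>P n. CCf (n, pr))" by simp
        qed
        show "real (card (CL n)) \<le> Q n" if n: "N < n" for n
        proof -
          have n1: "1 \<le> n" using n by (simp add: N_def)
          have "card (CL n) \<le> (\<Sum>pr\<in>P n. card (CCf (n, pr)))" unfolding CL_def by (rule card_UN_le[OF Pfin])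
          then have "real (card (CL n)) \<le> (\<Sum>pr\<in>P n. real (card (CCf (n, pr))))"
            by (metis of_nat_le_iff of_nat_sum)
          also have "\<dots> \<le> (\<Sum>pr\<in>P n. A1 * \<rho> ^ n)"
            by (rule sum_mono) (use CCf n1 in auto)
          also have "\<dots> = real (card (P n)) * (A1 * \<rho> ^ n)" by simp
          also have "\<dots> \<le> (\<Lambda>^2) ^ n * (A1 * \<rho> ^ n)"
            using Pcard[of n] A10 \<rho>1 by (intro mult_right_mono) auto
          also have "\<dots> = A1 * (\<Lambda>^2 * \<rho>) ^ n" by (simp add: power_mult_distrib)
          also have "\<dots> \<le> A1 * B0 ^ n"
            using A10 \<rho>1 by (intro mult_left_mono power_mono) (auto simp: B0_def \<Lambda>_def)
          finally show ?thesis by (simp add: Q_def)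
        qed
        show "bounded U \<and> diameter U \<le> lv n" if n: "N < n" and U: "U \<in> CL n" for n U
        proof -
          have n1: "1 \<le> n" using n by (simp add: N_def)
          obtain pr where pr: "pr \<in> P n" "U \<in> CCf (n, pr)" using U by (auto simp: CL_def)
          have q: "(n, pr) \<in> Sigma {1..} P" using pr(1) n1 by simp
          have "\<forall>A\<in>CCf (n, pr). bounded A \<and> diameter A \<le> 2 * (2 * \<epsilon> ^ n / c) powr (1 / real k)"
            using bspec[OF CCf q] by simp
          then have "bounded U \<and> diameter U \<le> 2 * (2 * \<epsilon> ^ n / c) powr (1 / real k)"
            using pr(2) by blast
          moreover have "2 * (2 * \<epsilon> ^ n / c) powr (1 / real k) = lv n"
          proof -
            have e: "2 * \<epsilon> ^ n / c = (2 / c) * (\<tau> ^ n) ^ k"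
              by (simp add: \<epsilon>_def power_mult[symmetric] mult.commute)
            have "(2 * \<epsilon> ^ n / c) powr (1 / real k) = ((2 / c) * (\<tau> ^ n) ^ k) powr (1 / real k)"
              by (simp only: e)
            also have "\<dots> = (2 / c) powr (1 / real k) * ((\<tau> ^ n) ^ k) powr (1 / real k)"
              by (rule powr_mult)
            also have "((\<tau> ^ n) ^ k) powr (1 / real k) = \<tau> ^ n"
              using \<tau>0 k by (intro pow_powr_inv) auto
            finally show ?thesis by (simp add: lv_def \<kappa>_def)
          qed
          ultimately show ?thesis by simp
        qed
        show "lv n \<le> \<delta>H" if n: "N < n" for n
        proof -
          have "\<tau> ^ n \<le> (1/2) ^ n" using \<tau>0 \<tau>h by (intro power_mono) auto
          also have "(1/2::real) ^ n \<le> (1/2) ^ N" using n by (intro power_decreasing) auto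
          finally have "lv n \<le> 2 * \<kappa> * (1/2) ^ N" using \<kappa>0 by (simp add: lv_def)
          then show ?thesis using hN(2) by simp
        qed
        show "(\<Sum>n\<in>{N<..M}. Q n * lv n powr s) \<le> \<eta>'" for M
        proof -
          have "Q n * lv n powr s \<le> A3 * (1/2) ^ n" for n
          proof -
            have "lv n powr s = (2 * \<kappa>) powr s * (\<tau> powr s) ^ n"
              using \<kappa>0 \<tau>0 by (simp add: lv_def powr_mult powr_pow_swap)
            then have "Q n * lv n powr s = A3 * (B0 * \<tau> powr s) ^ n"
              by (simp add: Q_def A3_def power_mult_distrib mult_ac)
            also have "\<dots> \<le> A3 * (1/2) ^ n"
              using A30 \<tau>s B01 by (intro mult_left_mono power_mono) auto
            finally show ?thesis .
          qed
          then have "(\<Sum>n\<in>{N<..M}. Q n * lv n powr s) \<le> (\<Sum>n\<in>{N<..M}. A3 * (1/2) ^ n)"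
            by (intro sum_mono)
          also have "\<dots> = A3 * (\<Sum>n\<in>{N<..M}. (1/2) ^ n)" by (simp add: sum_distrib_left)
          also have "\<dots> \<le> A3 * (1/2) ^ N" using A30 geom_tail by (intro mult_left_mono) auto
          also have "\<dots> \<le> \<eta>'" by (rule hN(1))
          finally show ?thesis .
        qed
        show "E \<subseteq> (\<Union>n\<in>{N<..}. \<Union>(CL n))"
        proof
          fix t assume t: "t \<in> E"
          have N1: "N \<in> {1..}" by (simp add: N_def)
          define S where "S n = {(xs, ys). xs \<in> lists Lam \<and> ys \<in> lists Lam \<and> length xs = n \<and> length ys = n
                              \<and> hd xs \<noteq> hd ys}" for n
          have SP: "S n = P n" for n by (simp add: S_def P_def)
          have tI: "\<forall>\<epsilon>'\<in>{0<..}. \<forall>N'\<in>{1..}. t \<in> (\<Union>n\<in>{N'<..}. \<Union>(xs, ys) \<in> S n.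
                 {t\<in>{a..b}. norm (Delta f x0 xs ys t) \<le> \<epsilon>' ^ n})"
            using t unfolding E_def exc_set_def S_def by (simp only: INT_iff)
          have "t \<in> (\<Union>n\<in>{N<..}. \<Union>(xs, ys) \<in> S n. {t\<in>{a..b}. norm (Delta f x0 xs ys t) \<le> \<epsilon> ^ n})"
            using tI \<epsilon>0 N1 by simp
          then obtain n where n: "n \<in> {N<..}" and tn: "t \<in> (\<Union>(xs, ys) \<in> S n. {t\<in>{a..b}. norm (Delta f x0 xs ys t) \<le> \<epsilon> ^ n})"
            by (rule UN_E)
          from tn obtain pr where pr0: "pr \<in> S n" and tp: "t \<in> (\<lambda>(xs, ys). {t\<in>{a..b}. norm (Delta f x0 xs ys t) \<le> \<epsilon> ^ n}) pr"
            by (rule UN_E)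
          obtain xs ys where xy: "pr = (xs, ys)" by (cases pr)
          have pr: "(xs, ys) \<in> P n" using pr0 xy SP by simp
          have tt: "t \<in> {a..b}" "norm (Delta f x0 xs ys t) \<le> \<epsilon> ^ n" using tp xy by simp_all
          have n1: "1 \<le> n" using n by (simp add: N_def)
          have q: "(n, xs, ys) \<in> Sigma {1..} P" using n1 pr by simp
          have "{t\<in>{a..b}. norm (Delta f x0 xs ys t) \<le> \<epsilon> ^ n} \<subseteq> \<Union>(CCf (n, xs, ys))"
            using bspec[OF CCf q] by simp
          then have "t \<in> \<Union>(CCf (n, xs, ys))" using tt by blast
          then show "t \<in> (\<Union>n\<in>{N<..}. \<Union>(CL n))" using n pr by (auto simp: CL_def)
        qed
      qed
    qed
    have pre0: "hausdorff_pre s \<delta>H E = 0" if "\<delta>H > 0" for \<delta>H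
    proof -
      have "hausdorff_pre s \<delta>H E \<le> 0"
      proof (rule ennreal_le_epsilon)
        fix e :: real assume "0 < e"
        then show "hausdorff_pre s \<delta>H E \<le> 0 + ennreal e" using preb[OF that] by simp
      qed
      then show ?thesis by simp
    qed
    show ?thesis unfolding hausdorff_outer_def using pre0 by simp
  qed
  show ?thesis
    unfolding E_def[symmetric] by (rule hdim_zero) (rule H0)
qed

end
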